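(* Let $\alpha,\beta>0$, let $n$ be a positive integer, and let $\mathbf{g}=(g_0,g_1,\dots,g_{n-1})$ with $g_k\in H(\mathbb{D})$ for $0\le k\le n-1$. Define $I_{\mathbf{g}}^{(n)}f=I^n\left(fg_0+f'g_1+\cdots+f^{(n-1)}g_{n-1}\right)$ and, for $g\in H(\mathbb{D})$, $I_g^{n,k}f=I^n(f^{(k)}g)$. Then $I_{\mathbf{g}}^{(n)}:\mathcal{B}^{\alpha}\to\mathcal{B}^{\beta}$ is bounded (respectively compact) if and only if each $I_{g_k}^{n,k}:\mathcal{B}^{\alpha}\to\mathcal{B}^{\beta}$, $0\le k\le n-1$, is bounded (respectively compact).
   Context: $\mathbb{D}$ is the open unit disc in $\mathbb{C}$ and $H(\mathbb{D})$ the space of analytic functions on $\mathbb{D}$. For $\alpha>0$, $\mathcal{B}^{\alpha}$ is the Banach space of $f\in H(\mathbb{D})$ with $\|f\|_{\mathcal{B}^{\alpha}}=|f(0)|+\sup_{z\in\mathbb{D}}(1-|z|^2)^{\alpha}|f'(z)|<\infty$. $I$ is the integration operator $If(z)=\int_0^z f(\zeta)\,d\zeta$ and $I^n$ its $n$th iterate. An operator is bounded (compact) from $\mathcal{B}^\alpha$ to $\mathcal{B}^\beta$ if it maps $\mathcal{B}^\alpha$ into $\mathcal{B}^\beta$ and is bounded (compact) as a linear operator between these Banach spaces. *)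

theory Defs
  imports "HOL-Complex_Analysis.Complex_Analysis"
begin

definition bloch_seminorm :: "real \<Rightarrow> (complex \<Rightarrow> complex) \<Rightarrow> real" where
  "bloch_seminorm \<alpha> f =
     (SUP z\<in>ball 0 1. (1 - (norm z)\<^sup>2) powr \<alpha> * norm (deriv f z))"

definition bloch_space :: "real \<Rightarrow> (complex \<Rightarrow> complex) set" where
  "bloch_space \<alpha> = {f. f holomorphic_on ball 0 1 \<and>
      bdd_above ((\<lambda>z. (1 - (norm z)\<^sup>2) powr \<alpha> * norm (deriv f z)) ` ball 0 1)}"

definition bloch_norm :: "real \<Rightarrow> (complex \<Rightarrow> complex) \<Rightarrow> real" where
  "bloch_norm \<alpha> f = norm (f 0) + bloch_seminorm \<alpha> f"

definition integ_op :: "(complex \<Rightarrow> complex) \<Rightarrow> complex \<Rightarrow> complex" where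
  "integ_op f = (\<lambda>z. contour_integral (linepath 0 z) f)"

definition I_vec :: "nat \<Rightarrow> (nat \<Rightarrow> complex \<Rightarrow> complex) \<Rightarrow> (complex \<Rightarrow> complex) \<Rightarrow> complex \<Rightarrow> complex" where
  "I_vec n g f = (integ_op ^^ n) (\<lambda>z. \<Sum>k<n. (deriv ^^ k) f z * g k z)"

definition I_nk :: "nat \<Rightarrow> nat \<Rightarrow> (complex \<Rightarrow> complex) \<Rightarrow> (complex \<Rightarrow> complex) \<Rightarrow> complex \<Rightarrow> complex" where
  "I_nk n k g f = (integ_op ^^ n) (\<lambda>z. (deriv ^^ k) f z * g z)"

definition bounded_bloch_op :: "real \<Rightarrow> real \<Rightarrow> ((complex \<Rightarrow> complex) \<Rightarrow> complex \<Rightarrow> complex) \<Rightarrow> bool" where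
  "bounded_bloch_op \<alpha> \<beta> T \<longleftrightarrow>
     (\<forall>f\<in>bloch_space \<alpha>. T f \<in> bloch_space \<beta>) \<and>
     (\<exists>C. \<forall>f\<in>bloch_space \<alpha>. bloch_norm \<beta> (T f) \<le> C * bloch_norm \<alpha> f)"

definition compact_bloch_op :: "real \<Rightarrow> real \<Rightarrow> ((complex \<Rightarrow> complex) \<Rightarrow> complex \<Rightarrow> complex) \<Rightarrow> bool" where
  "compact_bloch_op \<alpha> \<beta> T \<longleftrightarrow>
     (\<forall>f\<in>bloch_space \<alpha>. T f \<in> bloch_space \<beta>) \<and>
     (\<forall>F :: nat \<Rightarrow> complex \<Rightarrow> complex. (\<forall>j. F j \<in> bloch_space \<alpha> \<and> bloch_norm \<alpha> (F j) \<le> 1) \<longrightarrow>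
        (\<exists>r h. strict_mono r \<and> h \<in> bloch_space \<beta> \<and>
           (\<lambda>j. bloch_norm \<beta> (T (F (r j)) - h)) \<longlonglongrightarrow> 0))"

end

theory Submission
  imports Defs
begin


abbreviation "D \<equiv> ball (0::complex) 1"

lemma w_pos: "z \<in> D \<Longrightarrow> 0 < 1 - (cmod z)\<^sup>2"
proof -
  assume "z \<in> D"
  then have "cmod z < 1" by simp
  then have "(cmod z)\<^sup>2 < 1" by (simp add: power_less_one_iff abs_square_less_1)
  then show ?thesis by simp
qed

lemma w_le1: "1 - (cmod z)\<^sup>2 \<le> 1" by simp

lemma eqD_eventually: "(\<forall>z\<in>D. f z = g z) \<Longrightarrow> z \<in> D \<Longrightarrow> eventually (\<lambda>x. f x = g x) (nhds z)"
  using eventually_nhds_in_open[of D z] by (auto elim!: eventually_mono)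

lemma deriv_eqD: "(\<forall>z\<in>D. f z = g z) \<Longrightarrow> z \<in> D \<Longrightarrow> deriv f z = deriv g z"
  by (rule deriv_cong_ev[OF eqD_eventually]) auto

lemma hderiv_eqD: "(\<forall>z\<in>D. f z = g z) \<Longrightarrow> z \<in> D \<Longrightarrow> (deriv ^^ k) f z = (deriv ^^ k) g z"
  by (rule higher_deriv_cong_ev[OF eqD_eventually]) auto

lemma bloch_cong:
  assumes "\<forall>z\<in>D. f z = g z"
  shows "bloch_seminorm a f = bloch_seminorm a g" "bloch_norm a f = bloch_norm a g"
        "(f \<in> bloch_space a) = (g \<in> bloch_space a)"
proof -
  have d: "\<And>z. z \<in> D \<Longrightarrow> deriv f z = deriv g z" using deriv_eqD[OF assms] by blast
  have im: "(\<lambda>z. (1 - (norm z)\<^sup>2) powr a * norm (deriv f z)) ` D = (\<lambda>z. (1 - (norm z)\<^sup>2) powr a * norm (deriv g z)) ` D"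
    using d by (intro image_cong) auto
  show 1: "bloch_seminorm a f = bloch_seminorm a g"
    unfolding bloch_seminorm_def using im by simp
  show "bloch_norm a f = bloch_norm a g" unfolding bloch_norm_def 1 using assms by simp
  have "(f holomorphic_on D) = (g holomorphic_on D)"
  proof
    assume "f holomorphic_on D" then show "g holomorphic_on D"
      by (rule holomorphic_transform) (use assms in auto)
  next
    assume "g holomorphic_on D" then show "f holomorphic_on D"
      by (rule holomorphic_transform) (use assms in auto)
  qed
  then show "(f \<in> bloch_space a) = (g \<in> bloch_space a)"
    unfolding bloch_space_def using im by simp
qed

lemma bloch_upper:
  assumes "f \<in> bloch_space a" "z \<in> D"
  shows "(1 - (cmod z)\<^sup>2) powr a * cmod (deriv f z) \<le> bloch_seminorm a f"
  unfolding bloch_seminorm_def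
  using assms by (intro cSUP_upper) (auto simp: bloch_space_def)

lemma bloch_seminorm_nonneg:
  assumes "f \<in> bloch_space a" shows "0 \<le> bloch_seminorm a f"
proof -
  have "0 \<le> (1 - (cmod (0::complex))\<^sup>2) powr a * cmod (deriv f 0)" by simp
  also have "\<dots> \<le> bloch_seminorm a f" by (rule bloch_upper[OF assms]) simp
  finally show ?thesis .
qed

lemma bloch_norm_nonneg: "f \<in> bloch_space a \<Longrightarrow> 0 \<le> bloch_norm a f"
  unfolding bloch_norm_def using bloch_seminorm_nonneg by (smt (verit) norm_ge_zero)

lemma bloch_seminorm_le_norm: "f \<in> bloch_space a \<Longrightarrow> bloch_seminorm a f \<le> bloch_norm a f"
  unfolding bloch_norm_def by simp

lemma bloch_f0_le_norm: "f \<in> bloch_space a \<Longrightarrow> cmod (f 0) \<le> bloch_norm a f"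
  unfolding bloch_norm_def using bloch_seminorm_nonneg by simp

lemma bloch_upper_norm:
  assumes "f \<in> bloch_space a" "z \<in> D"
  shows "(1 - (cmod z)\<^sup>2) powr a * cmod (deriv f z) \<le> bloch_norm a f"
  using bloch_upper[OF assms] bloch_seminorm_le_norm[OF assms(1)] by linarith

lemma bloch_bound_intro:
  assumes "f holomorphic_on D" "\<And>z. z \<in> D \<Longrightarrow> (1 - (cmod z)\<^sup>2) powr a * cmod (deriv f z) \<le> M"
  shows "f \<in> bloch_space a" "bloch_seminorm a f \<le> M"
proof -
  show "f \<in> bloch_space a" unfolding bloch_space_def using assms
    by (auto simp: bdd_above_def intro!: exI[of _ M])
  show "bloch_seminorm a f \<le> M" unfolding bloch_seminorm_def
    using assms by (intro cSUP_least) auto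
qed

lemma bloch_holo: "f \<in> bloch_space a \<Longrightarrow> f holomorphic_on D"
  by (simp add: bloch_space_def)

lemma deriv_add_D:
  assumes "f holomorphic_on D" "g holomorphic_on D" "z \<in> D"
  shows "deriv (\<lambda>z. f z + g z) z = deriv f z + deriv g z"
  using assms by (intro deriv_add holomorphic_on_imp_differentiable_at[of _ D]) auto

lemma deriv_cmult_D:
  assumes "f holomorphic_on D" "z \<in> D"
  shows "deriv (\<lambda>z. c * f z) z = c * deriv f z"
  using assms by (intro deriv_cmult holomorphic_on_imp_differentiable_at[of _ D]) auto

lemma bloch_add:
  assumes "f \<in> bloch_space a" "g \<in> bloch_space a"
  shows "(\<lambda>z. f z + g z) \<in> bloch_space a"
        "bloch_norm a (\<lambda>z. f z + g z) \<le> bloch_norm a f + bloch_norm a g"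
proof -
  have h: "(\<lambda>z. f z + g z) holomorphic_on D" using assms bloch_holo by (intro holomorphic_intros) auto
  have b: "(1 - (cmod z)\<^sup>2) powr a * cmod (deriv (\<lambda>z. f z + g z) z) \<le> bloch_seminorm a f + bloch_seminorm a g"
    if z: "z \<in> D" for z
  proof -
    have "(1 - (cmod z)\<^sup>2) powr a * cmod (deriv (\<lambda>z. f z + g z) z)
        = (1 - (cmod z)\<^sup>2) powr a * cmod (deriv f z + deriv g z)"
      using deriv_add_D[OF bloch_holo[OF assms(1)] bloch_holo[OF assms(2)] z] by simp
    also have "\<dots> \<le> (1 - (cmod z)\<^sup>2) powr a * cmod (deriv f z) + (1 - (cmod z)\<^sup>2) powr a * cmod (deriv g z)"
      by (metis distrib_left mult_left_mono norm_triangle_ineq powr_ge_zero)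
    also have "\<dots> \<le> bloch_seminorm a f + bloch_seminorm a g"
      using bloch_upper[OF assms(1) z] bloch_upper[OF assms(2) z] by linarith
    finally show ?thesis .
  qed
  show "(\<lambda>z. f z + g z) \<in> bloch_space a" using bloch_bound_intro[OF h b] by blast
  have "bloch_seminorm a (\<lambda>z. f z + g z) \<le> bloch_seminorm a f + bloch_seminorm a g"
    using bloch_bound_intro[OF h b] by blast
  then show "bloch_norm a (\<lambda>z. f z + g z) \<le> bloch_norm a f + bloch_norm a g"
    unfolding bloch_norm_def using norm_triangle_ineq[of "f 0" "g 0"] by simp
qed

lemma bloch_cmult:
  assumes "f \<in> bloch_space a"
  shows "(\<lambda>z. c * f z) \<in> bloch_space a"
        "bloch_norm a (\<lambda>z. c * f z) \<le> cmod c * bloch_norm a f"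
proof -
  have h: "(\<lambda>z. c * f z) holomorphic_on D" using assms bloch_holo by (intro holomorphic_intros) auto
  have b: "(1 - (cmod z)\<^sup>2) powr a * cmod (deriv (\<lambda>z. c * f z) z) \<le> cmod c * bloch_seminorm a f"
    if z: "z \<in> D" for z
  proof -
    have "(1 - (cmod z)\<^sup>2) powr a * cmod (deriv (\<lambda>z. c * f z) z)
        = cmod c * ((1 - (cmod z)\<^sup>2) powr a * cmod (deriv f z))"
      using deriv_cmult_D[OF bloch_holo[OF assms(1)] z] by (simp add: norm_mult)
    also have "\<dots> \<le> cmod c * bloch_seminorm a f"
      using bloch_upper[OF assms(1) z] by (simp add: mult_left_mono)
    finally show ?thesis .
  qed
  show "(\<lambda>z. c * f z) \<in> bloch_space a" using bloch_bound_intro[OF h b] by blast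
  have "bloch_seminorm a (\<lambda>z. c * f z) \<le> cmod c * bloch_seminorm a f"
    using bloch_bound_intro[OF h b] by blast
  then show "bloch_norm a (\<lambda>z. c * f z) \<le> cmod c * bloch_norm a f"
    unfolding bloch_norm_def by (simp add: norm_mult distrib_left)
qed

lemma bloch_diff:
  assumes "f \<in> bloch_space a" "g \<in> bloch_space a"
  shows "(\<lambda>z. f z - g z) \<in> bloch_space a"
        "bloch_norm a (\<lambda>z. f z - g z) \<le> bloch_norm a f + bloch_norm a g"
proof -
  have m: "(\<lambda>z. (-1) * g z) \<in> bloch_space a" "bloch_norm a (\<lambda>z. (-1) * g z) \<le> bloch_norm a g"
    using bloch_cmult[OF assms(2), of "-1"] by auto
  have e: "(\<lambda>z. f z - g z) = (\<lambda>z. f z + (-1) * g z)" by simp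
  show "(\<lambda>z. f z - g z) \<in> bloch_space a" unfolding e using bloch_add[OF assms(1) m(1)] by blast
  show "bloch_norm a (\<lambda>z. f z - g z) \<le> bloch_norm a f + bloch_norm a g"
    unfolding e using bloch_add[OF assms(1) m(1)] m(2) by linarith
qed

lemma bloch_zero: "(\<lambda>z. 0) \<in> bloch_space a" "bloch_norm a (\<lambda>z. 0) = 0"
proof -
  have h: "(\<lambda>z::complex. 0::complex) holomorphic_on D" by simp
  have b: "(1 - (cmod z)\<^sup>2) powr a * cmod (deriv (\<lambda>z. 0) z) \<le> 0" for z :: complex by simp
  show "(\<lambda>z. 0) \<in> bloch_space a" using bloch_bound_intro[OF h b] by blast
  then have "bloch_seminorm a (\<lambda>z. 0) \<ge> 0" by (rule bloch_seminorm_nonneg)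
  moreover have "bloch_seminorm a (\<lambda>z. 0) \<le> 0" using bloch_bound_intro[OF h b] by blast
  ultimately show "bloch_norm a (\<lambda>z. 0) = 0" unfolding bloch_norm_def by simp
qed

lemma bloch_sum:
  assumes "finite S" "\<And>i. i \<in> S \<Longrightarrow> F i \<in> bloch_space a"
  shows "(\<lambda>z. \<Sum>i\<in>S. F i z) \<in> bloch_space a \<and>
         bloch_norm a (\<lambda>z. \<Sum>i\<in>S. F i z) \<le> (\<Sum>i\<in>S. bloch_norm a (F i))"
  using assms
proof (induction S rule: finite_induct)
  case empty then show ?case using bloch_zero by simp
next
  case (insert x S)
  have e: "(\<lambda>z. \<Sum>i\<in>insert x S. F i z) = (\<lambda>z. F x z + (\<Sum>i\<in>S. F i z))"
    using insert by simp
  from insert have I: "(\<lambda>z. \<Sum>i\<in>S. F i z) \<in> bloch_space a"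
     "bloch_norm a (\<lambda>z. \<Sum>i\<in>S. F i z) \<le> (\<Sum>i\<in>S. bloch_norm a (F i))" by auto
  have Fx: "F x \<in> bloch_space a" using insert by simp
  show ?case unfolding e using bloch_add[OF Fx I(1)] I(2) insert by simp
qed

lemma bloch_pointwise:
  assumes "f \<in> bloch_space a" "z \<in> D" and a0: "0 \<le> a"
  shows "cmod (f z) \<le> (1 + (1 - (cmod z)\<^sup>2) powr (-a)) * bloch_norm a f"
proof -
  let ?S = "cball 0 (cmod z)"
  define B where "B = bloch_seminorm a f * (1 - (cmod z)\<^sup>2) powr (-a)"
  have SD: "?S \<subseteq> D" using assms(2) by auto
  have hol: "f holomorphic_on D" using bloch_holo[OF assms(1)] .
  have sn: "0 \<le> bloch_seminorm a f" using bloch_seminorm_nonneg[OF assms(1)] .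
  have B0: "0 \<le> B" unfolding B_def using sn by simp
  have der: "(f has_field_derivative deriv f x) (at x within ?S)" if "x \<in> ?S" for x
  proof -
    have "x \<in> D" using that SD by blast
    then have "(f has_field_derivative deriv f x) (at x)"
      using hol by (intro holomorphic_derivI[of _ D]) auto
    then show ?thesis by (rule has_field_derivative_at_within)
  qed
  have bnd: "cmod (deriv f x) \<le> B" if x: "x \<in> ?S" for x
  proof -
    have xD: "x \<in> D" using x SD by blast
    have wx: "0 < 1 - (cmod x)\<^sup>2" using w_pos[OF xD] .
    have wz: "0 < 1 - (cmod z)\<^sup>2" using w_pos[OF assms(2)] .
    have "cmod x \<le> cmod z" using x by simp
    then have "(cmod x)\<^sup>2 \<le> (cmod z)\<^sup>2" by (simp add: power_mono)
    then have le: "1 - (cmod z)\<^sup>2 \<le> 1 - (cmod x)\<^sup>2" by simp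
    have pw: "(1 - (cmod x)\<^sup>2) powr (-a) \<le> (1 - (cmod z)\<^sup>2) powr (-a)"
      using a0 wz le by (intro powr_mono2') auto
    have "cmod (deriv f x) = (1 - (cmod x)\<^sup>2) powr a * cmod (deriv f x) * (1 - (cmod x)\<^sup>2) powr (-a)"
      using wx by (simp add: powr_minus field_simps)
    also have "\<dots> \<le> bloch_seminorm a f * (1 - (cmod x)\<^sup>2) powr (-a)"
      using bloch_upper[OF assms(1) xD] by (intro mult_right_mono) auto
    also have "\<dots> \<le> B"
      unfolding B_def using pw sn by (intro mult_left_mono) auto
    finally show ?thesis .
  qed
  have "cmod (f z - f 0) \<le> B * cmod (z - 0)"
    by (rule field_differentiable_bound[OF convex_cball der bnd]) auto
  also have "\<dots> \<le> B" using assms(2) B0 by (simp add: mult_left_le)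
  finally have "cmod (f z - f 0) \<le> B" .
  then have "cmod (f z) \<le> cmod (f 0) + B" using norm_triangle_sub[of "f z" "f 0"] by linarith
  also have "\<dots> \<le> (1 + (1 - (cmod z)\<^sup>2) powr (-a)) * bloch_norm a f"
  proof -
    have "0 \<le> (1 - (cmod z)\<^sup>2) powr (-a) * cmod (f 0)" by simp
    then show ?thesis unfolding B_def bloch_norm_def using sn by (simp add: algebra_simps)
  qed
  finally show ?thesis .
qed


lemma seg_D: "z \<in> D \<Longrightarrow> closed_segment 0 z \<subseteq> D"
  by (intro closed_segment_subset) auto

lemma integ_op_has_deriv:
  assumes u: "u holomorphic_on D" and z: "z \<in> D"
  shows "(integ_op u has_field_derivative u z) (at z)"
  unfolding integ_op_def
proof (rule triangle_contour_integrals_starlike_primitive[where S=D and a=0])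
  show "continuous_on D u" using u holomorphic_on_imp_continuous_on by blast
  show "\<And>y. y \<in> D \<Longrightarrow> closed_segment 0 y \<subseteq> D" using seg_D by blast
  fix b c assume bc: "closed_segment b c \<subseteq> D"
  have b: "b \<in> D" and c: "c \<in> D" using bc ends_in_segment by blast+
  let ?g = "linepath 0 b +++ linepath b c +++ linepath c 0"
  have "path_image ?g \<subseteq> D"
    using path_image_join_subset[of "linepath 0 b" "linepath b c +++ linepath c 0"]
      path_image_join_subset[of "linepath b c" "linepath c 0"] seg_D[OF b] seg_D[OF c] bc
      closed_segment_commute[of 0 c]
    by (simp only: path_image_linepath) blast
  then have "(u has_contour_integral 0) ?g"
    by (intro Cauchy_theorem_convex_simple[OF u]) auto
  then show "contour_integral (linepath 0 b) u + contour_integral (linepath b c) u + contour_integral (linepath c 0) u = 0"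
    by (rule has_chain_integral_chain_integral3)
qed (use z in auto)

lemma integ_op_holo: "u holomorphic_on D \<Longrightarrow> integ_op u holomorphic_on D"
proof -
  assume u: "u holomorphic_on D"
  have "\<forall>x\<in>D. \<exists>f'. (integ_op u has_field_derivative f') (at x)"
    using integ_op_has_deriv[OF u] by blast
  then show ?thesis by (subst holomorphic_on_open) auto
qed

lemma integ_op_deriv: "u holomorphic_on D \<Longrightarrow> z \<in> D \<Longrightarrow> deriv (integ_op u) z = u z"
  using integ_op_has_deriv DERIV_imp_deriv by blast

lemma integ_op_0[simp]: "integ_op u 0 = 0"
  by (simp add: integ_op_def)

lemma integ_op_cong: "(\<forall>w\<in>D. u w = v w) \<Longrightarrow> z \<in> D \<Longrightarrow> integ_op u z = integ_op v z"
  unfolding integ_op_def using seg_D by (intro contour_integral_eq) auto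

lemma integ_op_integrable: "u holomorphic_on D \<Longrightarrow> z \<in> D \<Longrightarrow> u contour_integrable_on (linepath 0 z)"
  using seg_D by (intro contour_integrable_holomorphic_simple[of _ D]) auto

lemma integ_op_sum:
  assumes "finite S" "\<And>i. i \<in> S \<Longrightarrow> U i holomorphic_on D" "z \<in> D"
  shows "integ_op (\<lambda>w. \<Sum>i\<in>S. U i w) z = (\<Sum>i\<in>S. integ_op (U i) z)"
  unfolding integ_op_def using assms integ_op_integrable by (intro contour_integral_sum) auto

lemma integ_op_cmult:
  assumes "u holomorphic_on D" "z \<in> D"
  shows "integ_op (\<lambda>w. c * u w) z = c * integ_op u z"
  unfolding integ_op_def using assms integ_op_integrable by (intro contour_integral_lmul) auto

lemma integ_op_bound:
  assumes "u holomorphic_on D" "z \<in> D" "0 \<le> B" "\<And>w. w \<in> closed_segment 0 z \<Longrightarrow> cmod (u w) \<le> B"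
  shows "cmod (integ_op u z) \<le> B * cmod z"
  unfolding integ_op_def using contour_integral_bound_linepath[OF integ_op_integrable[OF assms(1,2)] assms(3,4)]
  by simp

lemma iter_holo: "u holomorphic_on D \<Longrightarrow> (integ_op ^^ j) u holomorphic_on D"
  by (induction j) (auto intro: integ_op_holo)

lemma iter_cong: "(\<forall>w\<in>D. u w = v w) \<Longrightarrow> \<forall>z\<in>D. (integ_op ^^ j) u z = (integ_op ^^ j) v z"
proof (induction j)
  case (Suc j)
  then show ?case using integ_op_cong[of "(integ_op ^^ j) u" "(integ_op ^^ j) v"] by simp
qed simp

lemma iter_sum:
  assumes "finite S" "\<And>i. i \<in> S \<Longrightarrow> U i holomorphic_on D"
  shows "\<forall>z\<in>D. (integ_op ^^ j) (\<lambda>w. \<Sum>i\<in>S. U i w) z = (\<Sum>i\<in>S. (integ_op ^^ j) (U i) z)"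
proof (induction j)
  case (Suc j)
  show ?case
  proof
    fix z assume z: "z \<in> D"
    have "(integ_op ^^ Suc j) (\<lambda>w. \<Sum>i\<in>S. U i w) z = integ_op ((integ_op ^^ j) (\<lambda>w. \<Sum>i\<in>S. U i w)) z"
      by simp
    also have "\<dots> = integ_op (\<lambda>w. \<Sum>i\<in>S. (integ_op ^^ j) (U i) w) z"
      using Suc z by (intro integ_op_cong) auto
    also have "\<dots> = (\<Sum>i\<in>S. integ_op ((integ_op ^^ j) (U i)) z)"
      using assms z iter_holo by (intro integ_op_sum) auto
    finally show "(integ_op ^^ Suc j) (\<lambda>w. \<Sum>i\<in>S. U i w) z = (\<Sum>i\<in>S. (integ_op ^^ Suc j) (U i) z)"
      by simp
  qed
qed simp

lemma iter_cmult:
  assumes "u holomorphic_on D"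
  shows "\<forall>z\<in>D. (integ_op ^^ j) (\<lambda>w. c * u w) z = c * (integ_op ^^ j) u z"
proof (induction j)
  case (Suc j)
  show ?case
  proof
    fix z assume z: "z \<in> D"
    have "(integ_op ^^ Suc j) (\<lambda>w. c * u w) z = integ_op ((integ_op ^^ j) (\<lambda>w. c * u w)) z"
      by simp
    also have "\<dots> = integ_op (\<lambda>w. c * (integ_op ^^ j) u w) z"
      using Suc z by (intro integ_op_cong) auto
    also have "\<dots> = c * integ_op ((integ_op ^^ j) u) z"
      using assms z iter_holo by (intro integ_op_cmult) auto
    finally show "(integ_op ^^ Suc j) (\<lambda>w. c * u w) z = c * (integ_op ^^ Suc j) u z"
      by simp
  qed
qed simp

lemma iter_diff:
  assumes "u holomorphic_on D" "v holomorphic_on D"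
  shows "\<forall>z\<in>D. (integ_op ^^ j) (\<lambda>w. u w - v w) z = (integ_op ^^ j) u z - (integ_op ^^ j) v z"
proof -
  let ?U = "\<lambda>i::nat. if i = 0 then u else (\<lambda>w. (-1) * v w)"
  have e: "(\<lambda>w. u w - v w) = (\<lambda>w. \<Sum>i\<in>{0,1}. ?U i w)" by auto
  have h: "\<And>i. i \<in> {0,1} \<Longrightarrow> ?U i holomorphic_on D" using assms by (auto intro!: holomorphic_intros)
  show ?thesis unfolding e using iter_sum[of "{0,1}" ?U j, OF _ h] iter_cmult[OF assms(2), of j "-1"] by simp
qed

lemma iter_deriv: "u holomorphic_on D \<Longrightarrow> 0 < n \<Longrightarrow> z \<in> D \<Longrightarrow> deriv ((integ_op ^^ n) u) z = (integ_op ^^ (n - 1)) u z"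
  by (cases n) (auto simp: integ_op_deriv iter_holo)

lemma iter_0: "0 < n \<Longrightarrow> (integ_op ^^ n) u 0 = 0"
  by (cases n) auto

lemma iter_hderiv: "u holomorphic_on D \<Longrightarrow> z \<in> D \<Longrightarrow> (deriv ^^ n) ((integ_op ^^ n) u) z = u z"
proof (induction n arbitrary: z)
  case (Suc n)
  have "(deriv ^^ Suc n) ((integ_op ^^ Suc n) u) z = (deriv ^^ n) (deriv ((integ_op ^^ Suc n) u)) z"
    by (simp add: funpow_Suc_right del: funpow.simps)
  also have "\<dots> = (deriv ^^ n) ((integ_op ^^ n) u) z"
    using Suc.prems by (intro hderiv_eqD) (auto simp: integ_op_deriv iter_holo)
  finally show ?case using Suc by simp
qed simp


lemma sq_aux: "(x::real) * 4 \<le> 2 + x * (x * 2)"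
proof -
  have "0 \<le> (x - 1) * (x - 1)" by simp
  then show ?thesis by (simp add: algebra_simps)
qed

lemma w_quarter:
  assumes a: "a \<in> D" and w: "cmod (w - a) \<le> (1 - cmod a) / 2"
  shows "w \<in> D" "(1 - (cmod a)\<^sup>2) / 4 \<le> 1 - (cmod w)\<^sup>2"
proof -
  have na: "cmod a < 1" using a by simp
  have "cmod w \<le> cmod a + cmod (w - a)" by (metis add.commute diff_add_cancel norm_triangle_ineq)
  then have nw: "cmod w \<le> (1 + cmod a) / 2" using w by simp
  then show "w \<in> D" using na by simp
  have "(1 - (cmod a)\<^sup>2) / 4 = (1 - cmod a) * (1 + cmod a) / 4" by (simp add: power2_eq_square algebra_simps)
  also have "\<dots> \<le> (1 - cmod a) / 2" using na by (simp add: field_simps sq_aux)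
  also have "\<dots> \<le> 1 - cmod w" using nw by simp
  also have "\<dots> \<le> 1 - (cmod w)\<^sup>2" using nw na by (simp add: power2_eq_square mult_left_le_one_le) 
  finally show "(1 - (cmod a)\<^sup>2) / 4 \<le> 1 - (cmod w)\<^sup>2" .
qed

lemma cauchy_weighted:
  assumes F: "F holomorphic_on D" and g: "0 \<le> \<gamma>" and M: "0 \<le> M"
    and b: "\<And>w. w \<in> D \<Longrightarrow> cmod (F w) \<le> M * (1 - (cmod w)\<^sup>2) powr (-\<gamma>)"
    and a: "a \<in> D"
  shows "cmod ((deriv ^^ k) F a) \<le> fact k * M * ((1 - (cmod a)\<^sup>2) / 4) powr (-(\<gamma> + real k))"
proof -
  define \<delta> where "\<delta> = 1 - (cmod a)\<^sup>2"
  define R where "R = (1 - cmod a) / 2"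
  have na: "cmod a < 1" using a by simp
  have d0: "0 < \<delta>" unfolding \<delta>_def using w_pos[OF a] .
  have R0: "0 < R" unfolding R_def using na by simp
  have Rd: "\<delta> / 4 \<le> R" unfolding R_def \<delta>_def using na
    by (simp add: power2_eq_square field_simps sq_aux)
  define M' where "M' = M * (\<delta> / 4) powr (-\<gamma>)"
  have M'0: "0 \<le> M'" unfolding M'_def using M by simp
  have bw: "cmod (F w) \<le> M'" if "cmod (w - a) \<le> R" for w
  proof -
    have wD: "w \<in> D" and ww: "\<delta> / 4 \<le> 1 - (cmod w)\<^sup>2"
      using w_quarter[OF a, of w] that unfolding R_def \<delta>_def by auto
    have "cmod (F w) \<le> M * (1 - (cmod w)\<^sup>2) powr (-\<gamma>)" using b[OF wD] .
    also have "\<dots> \<le> M'" unfolding M'_def using g d0 ww M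
      by (intro mult_left_mono powr_mono2') auto
    finally show ?thesis .
  qed
  have cb: "cball a R \<subseteq> D" using w_quarter(1)[OF a] by (auto simp: R_def dist_norm norm_minus_commute)
  have main: "cmod ((deriv ^^ k) F a) \<le> fact k * M' / R ^ k"
  proof (cases "k = 0")
    case True
    then show ?thesis using bw[of a] R0 by simp
  next
    case False
    show ?thesis
    proof (rule field_le_epsilon)
      fix e :: real assume e: "0 < e"
      define e' where "e' = e * R ^ k / fact k"
      have e'0: "0 < e'" unfolding e'_def using e R0 by simp
      have "cmod ((deriv ^^ k) F a) \<le> fact k * (M' + e') / R ^ k"
      proof (rule Cauchy_higher_deriv_bound[where y=0])
        show "F holomorphic_on ball a R" using F cb by (meson ball_subset_cball holomorphic_on_subset subset_trans)
        show "continuous_on (cball a R) F" using F cb by (meson holomorphic_on_imp_continuous_on holomorphic_on_subset)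
        show "\<And>w. w \<in> ball a R \<Longrightarrow> F w \<in> ball 0 (M' + e')"
          using bw e'0 by (auto simp: dist_norm norm_minus_commute) (smt (verit) bw)
      qed (use R0 False in auto)
      also have "\<dots> = fact k * M' / R ^ k + e"
        unfolding e'_def using R0 by (simp add: field_simps)
      finally show "cmod ((deriv ^^ k) F a) \<le> fact k * M' / R ^ k + e" .
    qed
  qed
  also have "\<dots> \<le> fact k * M' / (\<delta> / 4) ^ k"
    using Rd d0 M'0 by (intro divide_left_mono power_mono mult_nonneg_nonneg mult_pos_pos) auto
  also have "\<dots> = fact k * M * ((\<delta> / 4) powr (-\<gamma>) / (\<delta> / 4) powr (real k))"
    unfolding M'_def using d0 by (simp add: powr_realpow)
  also have "\<dots> = fact k * M * (\<delta> / 4) powr (-(\<gamma> + real k))"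
    using d0 by (simp add: powr_diff[symmetric] powr_add)
  finally show ?thesis unfolding \<delta>_def .
qed

lemma integ_growth:
  assumes u: "u holomorphic_on D" and g: "1 < \<gamma>" and M: "0 \<le> M"
    and b: "\<And>w. w \<in> D \<Longrightarrow> cmod (u w) \<le> M * (1 - (cmod w)\<^sup>2) powr (-\<gamma>)"
    and z: "z \<in> D"
  shows "cmod (integ_op u z) \<le> M * 2 powr (\<gamma> - 1) / (\<gamma> - 1) * (1 - (cmod z)\<^sup>2) powr (-(\<gamma> - 1))"
proof -
  define r where "r = cmod z"
  have r0: "0 \<le> r" and r1: "r < 1" using z by (auto simp: r_def)
  define f where "f = (\<lambda>t::real. integ_op u (of_real t * z))"
  define \<phi> where "\<phi> = (\<lambda>t::real. M / (\<gamma> - 1) * (1 - t * r) powr (1 - \<gamma>))"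
  define \<phi>' where "\<phi>' = (\<lambda>t::real. M * r * (1 - t * r) powr (- \<gamma>))"
  have inD: "of_real t * z \<in> D" if "0 \<le> t" "t \<le> 1" for t
  proof -
    have "cmod (of_real t * z) = t * r" using that by (simp add: r_def norm_mult)
    also have "\<dots> \<le> r" using that r0 by (simp add: mult_left_le_one_le)
    finally show ?thesis using r1 by simp
  qed
  have pos: "0 < 1 - t * r" if "0 \<le> t" "t \<le> 1" for t
    using that r0 r1 by (smt (verit) mult_left_le_one_le)
  have df: "(f has_vector_derivative (u (of_real t * z) * z)) (at t)" if "0 \<le> t" "t \<le> 1" for t
  proof -
    have "((\<lambda>w. integ_op u (w * z)) has_field_derivative (u (of_real t * z) * z)) (at (of_real t))"
    proof -
      have d1: "((\<lambda>w. w * z) has_field_derivative 1 * z) (at (of_real t))"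
        by (rule DERIV_cmult_right[OF DERIV_ident])
      show ?thesis using DERIV_chain2[OF integ_op_has_deriv[OF u inD[OF that]] d1] by simp
    qed
    then show ?thesis unfolding f_def by (rule has_vector_derivative_real_field)
  qed
  have dphi: "(\<phi> has_vector_derivative \<phi>' t) (at t)" if "0 \<le> t" "t \<le> 1" for t
  proof -
    have p: "0 < 1 - t * r" using pos[OF that] .
    have "(\<phi> has_real_derivative M / (\<gamma> - 1) * ((1 - \<gamma>) * (1 - t * r) powr (1 - \<gamma> - 1) * (- r))) (at t)"
    proof -
      have d1: "((\<lambda>t. 1 - t * r) has_real_derivative 0 - 1 * r) (at t)"
        by (rule DERIV_diff[OF DERIV_const DERIV_cmult_right[OF DERIV_ident]])
      show ?thesis unfolding \<phi>_def
        using DERIV_cmult[OF DERIV_chain2[OF has_real_derivative_powr[OF p, of "1 - \<gamma>"] d1], of "M / (\<gamma> - 1)"]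
        by simp
    qed
    moreover have "M / (\<gamma> - 1) * ((1 - \<gamma>) * (1 - t * r) powr (1 - \<gamma> - 1) * (- r)) = \<phi>' t"
      unfolding \<phi>'_def using g by (simp add: field_simps)
    ultimately show ?thesis by (simp add: has_real_derivative_iff_has_vector_derivative)
  qed
  have fc: "continuous_on {0..1} f"
  proof (rule continuous_at_imp_continuous_on, rule ballI)
    fix t :: real assume "t \<in> {0..1}"
    then show "isCont f t" using has_vector_derivative_continuous[OF df[of t]] by auto
  qed
  have pc: "continuous_on {0..1} \<phi>"
  proof (rule continuous_at_imp_continuous_on, rule ballI)
    fix t :: real assume "t \<in> {0..1}"
    then show "isCont \<phi> t" using has_vector_derivative_continuous[OF dphi[of t]] by auto
  qed
  have bnd: "cmod (u (of_real t * z) * z) \<le> \<phi>' t" if "0 < t" "t < 1" for t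
  proof -
    have t: "0 \<le> t" "t \<le> 1" using that by auto
    have n: "cmod (of_real t * z) = t * r" using t by (simp add: r_def norm_mult)
    have le: "1 - t * r \<le> 1 - (cmod (of_real t * z))\<^sup>2"
      unfolding n using t r0 r1 by (simp add: power2_eq_square) (smt (verit) mult_left_le_one_le mult_nonneg_nonneg)
    have "cmod (u (of_real t * z) * z) = cmod (u (of_real t * z)) * r" by (simp add: norm_mult r_def)
    also have "\<dots> \<le> M * (1 - (cmod (of_real t * z))\<^sup>2) powr (-\<gamma>) * r"
      using b[OF inD[OF t]] r0 by (intro mult_right_mono) auto
    also have "\<dots> \<le> M * (1 - t * r) powr (-\<gamma>) * r"
      using pos[OF t] le g M r0 by (intro mult_right_mono mult_left_mono powr_mono2') auto
    finally show ?thesis unfolding \<phi>'_def by (simp add: ac_simps)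
  qed
  have "cmod (f 1 - f 0) \<le> \<phi> 1 - \<phi> 0"
    by (rule differentiable_bound_general[OF _ fc pc, of "\<lambda>t. u (of_real t * z) * z" \<phi>'])
       (use df dphi bnd in auto)
  then have "cmod (integ_op u z) \<le> \<phi> 1 - \<phi> 0" unfolding f_def by simp
  also have "\<dots> \<le> \<phi> 1" unfolding \<phi>_def using g M by simp
  also have "\<dots> = M / (\<gamma> - 1) * (1 - r) powr (-(\<gamma> - 1))" unfolding \<phi>_def by simp
  also have "\<dots> \<le> M / (\<gamma> - 1) * ((1 - r\<^sup>2) / 2) powr (-(\<gamma> - 1))"
  proof (intro mult_left_mono powr_mono2')
    have "0 \<le> (r - 1) * (r - 1)" by simp
    then show "(1 - r\<^sup>2) / 2 \<le> 1 - r" using r0 r1 by (simp add: power2_eq_square field_simps algebra_simps)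
    show "0 < (1 - r\<^sup>2) / 2" using r0 r1 by (simp add: power2_eq_square) (smt (verit) mult_left_le_one_le)
  qed (use g M in auto)
  also have "\<dots> = M * 2 powr (\<gamma> - 1) / (\<gamma> - 1) * (1 - (cmod z)\<^sup>2) powr (-(\<gamma> - 1))"
  proof -
    have "0 < 1 - r\<^sup>2" using r0 r1 by (simp add: power2_eq_square) (smt (verit) mult_left_le_one_le)
    then have p: "0 < 1 - r\<^sup>2" .
    have "((1 - r\<^sup>2) / 2) powr (-(\<gamma> - 1)) = inverse (((1 - r\<^sup>2) / 2) powr (\<gamma> - 1))"
      by (rule powr_minus)
    also have "\<dots> = 2 powr (\<gamma> - 1) * inverse ((1 - r\<^sup>2) powr (\<gamma> - 1))"
      using p by (simp add: powr_divide field_simps)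
    also have "inverse ((1 - r\<^sup>2) powr (\<gamma> - 1)) = (1 - r\<^sup>2) powr (-(\<gamma> - 1))"
      by (rule powr_minus[symmetric])
    finally show ?thesis unfolding r_def by simp
  qed
  finally show ?thesis .
qed


lemma deriv_cpow_shift: "deriv (\<lambda>z. c * (z - a) ^ q) = (\<lambda>z::complex. c * of_nat q * (z - a) ^ (q - 1))"
proof
  fix z :: complex
  have "((\<lambda>z. c * (z - a) ^ q) has_field_derivative c * (of_nat q * ((1 - 0) * (z - a) ^ (q - Suc 0)))) (at z)"
    by (intro DERIV_cmult DERIV_power DERIV_diff DERIV_ident DERIV_const)
  then show "deriv (\<lambda>z. c * (z - a) ^ q) z = c * of_nat q * (z - a) ^ (q - 1)"
    by (simp add: DERIV_imp_deriv)
qed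

lemma hderiv_pow: "(deriv ^^ j) (\<lambda>z. (z - a) ^ p) = (\<lambda>z::complex. (\<Prod>i<j. of_nat (p - i)) * (z - a) ^ (p - j))"
proof (induction j)
  case 0 then show ?case by simp
next
  case (Suc j)
  have "(deriv ^^ Suc j) (\<lambda>z. (z - a) ^ p) = deriv (\<lambda>z::complex. (\<Prod>i<j. of_nat (p - i)) * (z - a) ^ (p - j))"
    using Suc by simp
  also have "\<dots> = (\<lambda>z. (\<Prod>i<j. of_nat (p - i)) * of_nat (p - j) * (z - a) ^ (p - j - 1))"
    by (rule deriv_cpow_shift)
  also have "\<dots> = (\<lambda>z. (\<Prod>i<Suc j. of_nat (p - i)) * (z - a) ^ (p - Suc j))"
    by (simp add: prod.lessThan_Suc)
  finally show ?case .
qed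

lemma prod_fact: "(\<Prod>i<p. (of_nat (p - i) :: complex)) = fact p"
proof -
  have "(\<Prod>i<p. (of_nat (p - i) :: complex)) = of_nat (\<Prod>i<p. p - i)" by simp
  also have "\<dots> = fact p" by (simp add: fact_prod_rev atLeast0LessThan)
  finally show ?thesis .
qed

lemma hderiv_pow_at: "(deriv ^^ j) (\<lambda>z. (z - a) ^ p) a = (if j = p then fact p else (0::complex))"
proof -
  consider "j < p" | "j = p" | "p < j" by linarith
  then show ?thesis
  proof cases
    case 1 then show ?thesis by (simp add: hderiv_pow)
  next
    case 2 then show ?thesis by (simp add: hderiv_pow prod_fact del: of_nat_diff)
  next
    case 3
    then have "(\<Prod>i<j. (of_nat (p - i) :: complex)) = 0"
      by (intro prod_zero) auto
    then show ?thesis using 3 by (simp add: hderiv_pow)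
  qed
qed

lemma hderiv_powmult_zero:
  assumes H: "H holomorphic_on S" and S: "open S" "a \<in> S" and j: "j < p"
  shows "(deriv ^^ j) (\<lambda>z. (z - a) ^ p * H z) a = 0"
proof -
  have P: "(\<lambda>z. (z - a) ^ p) holomorphic_on S" by (intro holomorphic_intros)
  have "(deriv ^^ j) (\<lambda>z. (z - a) ^ p * H z) a =
        (\<Sum>i = 0..j. of_nat (j choose i) * (deriv ^^ i) (\<lambda>z. (z - a) ^ p) a * (deriv ^^ (j - i)) H a)"
    by (rule higher_deriv_mult[OF P H S])
  also have "\<dots> = 0"
    using j by (intro sum.neutral) (auto simp: hderiv_pow_at)
  finally show ?thesis .
qed


lemma pseudo_hyp:
  fixes a z :: complex
  shows "(cmod (1 - cnj a * z))\<^sup>2 - (cmod (z - a))\<^sup>2 = (1 - (cmod a)\<^sup>2) * (1 - (cmod z)\<^sup>2)"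
proof -
  have "complex_of_real ((cmod (1 - cnj a * z))\<^sup>2 - (cmod (z - a))\<^sup>2) =
        (1 - cnj a * z) * cnj (1 - cnj a * z) - (z - a) * cnj (z - a)"
    by (simp only: of_real_diff complex_norm_square)
  also have "\<dots> = (1 - a * cnj a) * (1 - z * cnj z)"
    by (simp add: algebra_simps)
  also have "\<dots> = complex_of_real ((1 - (cmod a)\<^sup>2) * (1 - (cmod z)\<^sup>2))"
    by (simp only: of_real_diff of_real_mult complex_norm_square of_real_1)
  finally show ?thesis using of_real_eq_iff by blast
qed

lemma dist_le_den:
  assumes "a \<in> D" "z \<in> D"
  shows "cmod (z - a) \<le> cmod (1 - cnj a * z)"
proof -
  have "0 \<le> (1 - (cmod a)\<^sup>2) * (1 - (cmod z)\<^sup>2)"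
    using w_pos[OF assms(1)] w_pos[OF assms(2)] by simp
  then have "(cmod (z - a))\<^sup>2 \<le> (cmod (1 - cnj a * z))\<^sup>2" using pseudo_hyp[of a z] by linarith
  then show ?thesis by (rule power2_le_imp_le) simp
qed

lemma den_ge:
  assumes "a \<in> D" "z \<in> D"
  shows "1 - cmod a \<le> cmod (1 - cnj a * z)" "1 - cmod z \<le> cmod (1 - cnj a * z)"
proof -
  have na: "cmod a < 1" and nz: "cmod z < 1" using assms by auto
  have t: "1 - cmod a * cmod z \<le> cmod (1 - cnj a * z)"
    using norm_triangle_ineq2[of 1 "cnj a * z"] by (simp add: norm_mult)
  have "cmod a * cmod z \<le> cmod a" using nz by (intro mult_left_le) auto
  then show "1 - cmod a \<le> cmod (1 - cnj a * z)" using t by linarith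
  have "cmod a * cmod z \<le> cmod z" using na by (intro mult_left_le_one_le) auto
  then show "1 - cmod z \<le> cmod (1 - cnj a * z)" using t by linarith
qed

lemma den_pos: "a \<in> D \<Longrightarrow> z \<in> D \<Longrightarrow> 0 < cmod (1 - cnj a * z)"
  using den_ge(1)[of a z] by auto

lemma den_nz: "a \<in> D \<Longrightarrow> z \<in> D \<Longrightarrow> 1 - cnj a * z \<noteq> 0"
  using den_pos by fastforce

lemma w_le_den:
  assumes "a \<in> D" "z \<in> D"
  shows "1 - (cmod z)\<^sup>2 \<le> 2 * cmod (1 - cnj a * z)"
proof -
  have nz: "cmod z < 1" using assms by auto
  have "1 - (cmod z)\<^sup>2 = (1 - cmod z) * (1 + cmod z)" by (simp add: power2_eq_square algebra_simps)
  also have "\<dots> \<le> (1 - cmod z) * 2" using nz by (intro mult_left_mono) auto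
  also have "\<dots> \<le> 2 * cmod (1 - cnj a * z)" using den_ge(2)[OF assms] by simp
  finally show ?thesis .
qed

definition cf :: "nat \<Rightarrow> complex \<Rightarrow> nat \<Rightarrow> complex" where
  "cf m a r = of_nat (m choose r) * (1 - cnj a * a) ^ (m - r) * (- cnj a) ^ r"

definition psi :: "nat \<Rightarrow> nat \<Rightarrow> nat \<Rightarrow> complex \<Rightarrow> complex \<Rightarrow> complex" where
  "psi n m k a z = (\<Sum>r<n-k. cf m a r * (z - a) ^ (k + r)) / (1 - cnj a * z) ^ m"

definition Hpsi :: "nat \<Rightarrow> nat \<Rightarrow> nat \<Rightarrow> complex \<Rightarrow> complex \<Rightarrow> complex" where
  "Hpsi n m k a z = (\<Sum>r\<in>{n-k..m}. cf m a r * (z - a) ^ (r - (n - k))) / (1 - cnj a * z) ^ m"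

lemma den_binomial: "(1 - cnj a * z) ^ m = (\<Sum>r\<le>m. cf m a r * (z - a) ^ r)"
proof -
  have "1 - cnj a * z = (- cnj a) * (z - a) + (1 - cnj a * a)" by (simp add: algebra_simps)
  then have "(1 - cnj a * z) ^ m = (\<Sum>r\<le>m. of_nat (m choose r) * ((- cnj a) * (z - a)) ^ r * (1 - cnj a * a) ^ (m - r))"
    by (simp only: binomial_ring)
  also have "\<dots> = (\<Sum>r\<le>m. cf m a r * (z - a) ^ r)"
    unfolding cf_def
  proof (intro sum.cong refl)
    fix r
    have "((- cnj a) * (z - a)) ^ r = (- cnj a) ^ r * (z - a) ^ r" by (rule power_mult_distrib)
    then show "of_nat (m choose r) * ((- cnj a) * (z - a)) ^ r * (1 - cnj a * a) ^ (m - r) =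
        of_nat (m choose r) * (1 - cnj a * a) ^ (m - r) * (- cnj a) ^ r * (z - a) ^ r"
      by (simp only: mult_ac)
  qed
  finally show ?thesis .
qed

lemma psi_expand:
  assumes "k \<le> n" "n \<le> m" and den: "1 - cnj a * z \<noteq> 0"
  shows "psi n m k a z = (z - a) ^ k - (z - a) ^ n * Hpsi n m k a z"
proof -
  let ?d = "(1 - cnj a * z) ^ m"
  let ?t = "\<lambda>r. cf m a r * (z - a) ^ r"
  have dn: "?d \<noteq> 0" using den by simp
  have U: "{..m} = {..<n-k} \<union> {n-k..m}" using assms by auto
  have "?d = (\<Sum>r<n-k. ?t r) + (\<Sum>r\<in>{n-k..m}. ?t r)"
    unfolding den_binomial U by (rule sum.union_disjoint) auto
  moreover have "(\<Sum>r\<in>{n-k..m}. ?t r) = (z - a) ^ (n - k) * (\<Sum>r\<in>{n-k..m}. cf m a r * (z - a) ^ (r - (n - k)))"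
    unfolding sum_distrib_left
  proof (intro sum.cong refl)
    fix r assume "r \<in> {n-k..m}"
    then have "r = (n - k) + (r - (n - k))" by auto
    then have "(z - a) ^ r = (z - a) ^ (n - k) * (z - a) ^ (r - (n - k))" by (metis power_add)
    then show "?t r = (z - a) ^ (n - k) * (cf m a r * (z - a) ^ (r - (n - k)))" by simp
  qed
  ultimately have e: "(\<Sum>r<n-k. ?t r) = ?d - (z - a) ^ (n - k) * (\<Sum>r\<in>{n-k..m}. cf m a r * (z - a) ^ (r - (n - k)))"
    by simp
  have "psi n m k a z = (z - a) ^ k * (\<Sum>r<n-k. ?t r) / ?d"
    unfolding psi_def by (simp add: sum_distrib_left power_add algebra_simps)
  also have "\<dots> = (z - a) ^ k * (?d - (z - a) ^ (n - k) * (\<Sum>r\<in>{n-k..m}. cf m a r * (z - a) ^ (r - (n - k)))) / ?d"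
    by (simp only: e)
  also have "\<dots> = (z - a) ^ k - (z - a) ^ k * (z - a) ^ (n - k) * Hpsi n m k a z"
    unfolding Hpsi_def using dn by (simp add: field_simps)
  also have "(z - a) ^ k * (z - a) ^ (n - k) = (z - a) ^ n"
    using assms by (simp add: power_add[symmetric])
  finally show ?thesis .
qed

lemma psi_holo: "a \<in> D \<Longrightarrow> psi n m k a holomorphic_on D"
  unfolding psi_def using den_nz by (intro holomorphic_intros) auto

lemma Hpsi_holo: "a \<in> D \<Longrightarrow> Hpsi n m k a holomorphic_on D"
  unfolding Hpsi_def using den_nz by (intro holomorphic_intros) auto

lemma psi_hderiv:
  assumes a: "a \<in> D" and "k \<le> n" "n \<le> m" "j < n"
  shows "(deriv ^^ j) (psi n m k a) a = (if j = k then fact k else 0)"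
proof -
  have eq: "\<forall>z\<in>D. psi n m k a z = (z - a) ^ k - (z - a) ^ n * Hpsi n m k a z"
    using psi_expand[OF assms(2,3)] den_nz[OF a] by blast
  have "(deriv ^^ j) (psi n m k a) a = (deriv ^^ j) (\<lambda>z. (z - a) ^ k - (z - a) ^ n * Hpsi n m k a z) a"
    by (rule hderiv_eqD[OF eq a])
  also have "\<dots> = (deriv ^^ j) (\<lambda>z. (z - a) ^ k) a - (deriv ^^ j) (\<lambda>z. (z - a) ^ n * Hpsi n m k a z) a"
    using a Hpsi_holo[OF a] by (intro higher_deriv_diff[of _ D]) (auto intro!: holomorphic_intros)
  also have "(deriv ^^ j) (\<lambda>z. (z - a) ^ n * Hpsi n m k a z) a = 0"
    using hderiv_powmult_zero[OF Hpsi_holo[OF a] _ a] assms by auto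
  finally show ?thesis by (simp add: hderiv_pow_at)
qed


lemma powr_ge1: "0 < (x::real) \<Longrightarrow> x \<le> 1 \<Longrightarrow> e \<le> 0 \<Longrightarrow> 1 \<le> x powr e"
  using powr_mono2'[of e x 1] by simp

lemma ep_deriv:
  assumes "1 - cnj a * z \<noteq> 0"
  shows "((\<lambda>z. (z - a) ^ p / (1 - cnj a * z) ^ m) has_field_derivative
     ((of_nat p * ((z - a) ^ (p - 1))) * (1 - cnj a * z) ^ m
       - (z - a) ^ p * (of_nat m * ((1 - cnj a * z) ^ (m - 1)) * (- cnj a))) / ((1 - cnj a * z) ^ m * (1 - cnj a * z) ^ m)) (at z)"
proof -
  have d1: "((\<lambda>z. (z - a) ^ p) has_field_derivative of_nat p * ((1 - 0) * (z - a) ^ (p - Suc 0))) (at z)"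
    by (intro DERIV_power DERIV_diff DERIV_ident DERIV_const)
  have d2: "((\<lambda>z. (1 - cnj a * z) ^ m) has_field_derivative of_nat m * ((0 - cnj a * 1) * (1 - cnj a * z) ^ (m - Suc 0))) (at z)"
    by (intro DERIV_power DERIV_diff DERIV_cmult DERIV_ident DERIV_const)
  have "(1 - cnj a * z) ^ m \<noteq> 0" using assms by simp
  from DERIV_divide[OF d1 d2 this] show ?thesis by (simp add: mult_ac)
qed

lemma ep_deriv_bound:
  assumes a: "a \<in> D" and z: "z \<in> D" and p: "1 \<le> p"
  shows "cmod (deriv (\<lambda>z. (z - a) ^ p / (1 - cnj a * z) ^ m) z) \<le> (p + m) * cmod (1 - cnj a * z) powr (real p - 1 - m)"
proof -
  define d where "d = cmod (1 - cnj a * z)"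
  define q where "q = cmod (z - a)"
  have d0: "0 < d" unfolding d_def using den_pos[OF a z] .
  have qd: "q \<le> d" unfolding q_def d_def using dist_le_den[OF a z] .
  have q0: "0 \<le> q" unfolding q_def by simp
  have na: "cmod a \<le> 1" using a by simp
  have "deriv (\<lambda>z. (z - a) ^ p / (1 - cnj a * z) ^ m) z =
     ((of_nat p * ((z - a) ^ (p - 1))) * (1 - cnj a * z) ^ m
       - (z - a) ^ p * (of_nat m * ((1 - cnj a * z) ^ (m - 1)) * (- cnj a))) / ((1 - cnj a * z) ^ m * (1 - cnj a * z) ^ m)"
    using ep_deriv[OF den_nz[OF a z]] by (rule DERIV_imp_deriv)
  also have "cmod \<dots> \<le> (p * q ^ (p - 1) * d ^ m + q ^ p * (m * d ^ (m - 1))) / (d ^ m * d ^ m)"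
  proof -
    have "cmod ((of_nat p * ((z - a) ^ (p - 1))) * (1 - cnj a * z) ^ m
       - (z - a) ^ p * (of_nat m * ((1 - cnj a * z) ^ (m - 1)) * (- cnj a)))
      \<le> cmod ((of_nat p * ((z - a) ^ (p - 1))) * (1 - cnj a * z) ^ m)
       + cmod ((z - a) ^ p * (of_nat m * ((1 - cnj a * z) ^ (m - 1)) * (- cnj a)))"
      by (rule norm_triangle_ineq4)
    also have "\<dots> \<le> p * q ^ (p - 1) * d ^ m + q ^ p * (m * d ^ (m - 1))"
    proof -
      have "cmod ((z - a) ^ p * (of_nat m * ((1 - cnj a * z) ^ (m - 1)) * (- cnj a)))
            = q ^ p * (m * d ^ (m - 1)) * cmod a"
        unfolding q_def d_def by (simp add: norm_mult norm_power)
      also have "\<dots> \<le> q ^ p * (m * d ^ (m - 1))"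
        using na q0 d0 by (intro mult_left_le) auto
      finally show ?thesis unfolding q_def d_def by (simp add: norm_mult norm_power)
    qed
    finally show ?thesis unfolding d_def by (simp add: norm_divide norm_mult norm_power divide_right_mono)
  qed
  also have "\<dots> \<le> (p * d ^ (p - 1) * d ^ m + d ^ p * (m * d ^ (m - 1))) / (d ^ m * d ^ m)"
    using q0 qd d0 by (intro divide_right_mono add_mono mult_right_mono mult_left_mono power_mono) auto
  also have "\<dots> = (p + m) * d powr (real p - 1 - m)"
  proof -
    have "p * d ^ (p - 1) * d ^ m + d ^ p * (m * d ^ (m - 1)) = (p * d powr (real p - 1 + m)) + (m * d powr (real p + m - 1))"
    proof -
      have A: "d ^ (p - 1) * d ^ m = d powr (real p - 1 + m)"
        using d0 p by (simp add: powr_realpow[symmetric] powr_add[symmetric] of_nat_diff)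
      have B: "m * d ^ p * d ^ (m - 1) = m * d powr (real p + m - 1)"
      proof (cases m)
        case 0 then show ?thesis by simp
      next
        case (Suc m')
        then have "d ^ p * d ^ (m - 1) = d powr (real p + m - 1)"
          using d0 by (simp add: powr_realpow[symmetric] powr_add[symmetric])
        then show ?thesis by simp
      qed
      have "p * d ^ (p - 1) * d ^ m + d ^ p * (m * d ^ (m - 1)) = p * (d ^ (p - 1) * d ^ m) + m * d ^ p * d ^ (m - 1)"
        by (simp add: algebra_simps)
      also have "\<dots> = (p * d powr (real p - 1 + m)) + (m * d powr (real p + m - 1))"
        unfolding A B ..
      finally show ?thesis .
    qed
    also have "\<dots> = (p + m) * d powr (real p - 1 + m)" by (simp add: algebra_simps)
    finally have e1: "p * d ^ (p - 1) * d ^ m + d ^ p * (m * d ^ (m - 1)) = (p + m) * d powr (real p - 1 + m)" .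
    have e2: "d ^ m * d ^ m = d powr (2 * real m)" using d0 by (simp add: powr_realpow[symmetric] powr_add[symmetric])
    have e3: "d powr (real p - 1 + m) / d powr (2 * real m) = d powr (real p - 1 - m)"
      using d0 by (simp add: powr_diff[symmetric] algebra_simps)
    have "(p + m) * d powr (real p - 1 + m) / d powr (2 * real m) = (p + m) * (d powr (real p - 1 + m) / d powr (2 * real m))"
      by simp
    then show ?thesis unfolding e1 e2 e3 by simp
  qed
  finally show ?thesis unfolding d_def by simp
qed


lemma ep_bloch:
  assumes a: "a \<in> D" and p: "1 \<le> p" and al: "0 \<le> \<alpha>" and pm: "\<alpha> + real p - 1 \<le> real m"
  shows "(\<lambda>z. (z - a) ^ p / (1 - cnj a * z) ^ m) \<in> bloch_space \<alpha>"
        "bloch_norm \<alpha> (\<lambda>z. (z - a) ^ p / (1 - cnj a * z) ^ m)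
           \<le> (1 + 2 powr \<alpha> * (real p + real m)) * (1 - cmod a) powr (\<alpha> + real p - 1 - real m)"
proof -
  let ?e = "\<lambda>z. (z - a) ^ p / (1 - cnj a * z) ^ m"
  let ?E = "\<alpha> + real p - 1 - real m"
  have t0: "0 < 1 - cmod a" and t1: "1 - cmod a \<le> 1" using a by auto
  have E0: "?E \<le> 0" using pm by simp
  have hol: "?e holomorphic_on D" using den_nz[OF a] by (intro holomorphic_intros) auto
  have b: "(1 - (cmod z)\<^sup>2) powr \<alpha> * cmod (deriv ?e z) \<le> 2 powr \<alpha> * (real p + real m) * (1 - cmod a) powr ?E"
    if z: "z \<in> D" for z
  proof -
    define d where "d = cmod (1 - cnj a * z)"
    have d0: "0 < d" unfolding d_def using den_pos[OF a z] .
    have dge: "1 - cmod a \<le> d" unfolding d_def using den_ge(1)[OF a z] .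
    have "(1 - (cmod z)\<^sup>2) powr \<alpha> \<le> (2 * d) powr \<alpha>"
      unfolding d_def using w_le_den[OF a z] w_pos[OF z] al by (intro powr_mono2) auto
    also have "\<dots> = 2 powr \<alpha> * d powr \<alpha>" using d0 by (simp add: powr_mult)
    finally have w: "(1 - (cmod z)\<^sup>2) powr \<alpha> \<le> 2 powr \<alpha> * d powr \<alpha>" .
    have "(1 - (cmod z)\<^sup>2) powr \<alpha> * cmod (deriv ?e z) \<le> (2 powr \<alpha> * d powr \<alpha>) * ((real p + real m) * d powr (real p - 1 - real m))"
      using w ep_deriv_bound[OF a z p, of m] unfolding d_def by (intro mult_mono) auto
    also have "\<dots> = 2 powr \<alpha> * (real p + real m) * (d powr \<alpha> * d powr (real p - 1 - real m))"
      by (simp add: algebra_simps)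
    also have "\<dots> = 2 powr \<alpha> * (real p + real m) * d powr ?E"
    proof -
      have "d powr \<alpha> * d powr (real p - 1 - real m) = d powr ?E"
        by (simp add: powr_add[symmetric] algebra_simps)
      then show ?thesis by simp
    qed
    also have "\<dots> \<le> 2 powr \<alpha> * (real p + real m) * (1 - cmod a) powr ?E"
      using E0 t0 dge by (intro mult_left_mono powr_mono2') auto
    finally show ?thesis .
  qed
  show "?e \<in> bloch_space \<alpha>" using bloch_bound_intro(1)[OF hol b] .
  have s: "bloch_seminorm \<alpha> ?e \<le> 2 powr \<alpha> * (real p + real m) * (1 - cmod a) powr ?E"
    using bloch_bound_intro(2)[OF hol b] .
  have "cmod (?e 0) = cmod a ^ p" by (simp add: norm_power)
  also have "\<dots> \<le> 1" using a by (simp add: power_le_one)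
  also have "\<dots> \<le> (1 - cmod a) powr ?E" using powr_ge1[OF t0 t1 E0] .
  finally have "cmod (?e 0) \<le> (1 - cmod a) powr ?E" .
  then show "bloch_norm \<alpha> ?e \<le> (1 + 2 powr \<alpha> * (real p + real m)) * (1 - cmod a) powr ?E"
    unfolding bloch_norm_def using s by (simp add: algebra_simps)
qed

definition Kpsi :: "real \<Rightarrow> nat \<Rightarrow> nat \<Rightarrow> nat \<Rightarrow> real" where
  "Kpsi \<alpha> n m k = (\<Sum>r<n-k. real (m choose r) * 2 ^ (m - r) * (1 + 2 powr \<alpha> * (real (k + r) + real m)))"

lemma cf_norm:
  assumes a: "a \<in> D" and r: "r \<le> m"
  shows "cmod (cf m a r) \<le> real (m choose r) * 2 ^ (m - r) * (1 - cmod a) ^ (m - r)"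
proof -
  have na: "cmod a < 1" using a by simp
  have "1 - cnj a * a = of_real (1 - (cmod a)\<^sup>2)"
    by (simp only: of_real_diff of_real_1 complex_norm_square) (simp add: mult.commute)
  then have "cmod (1 - cnj a * a) = cmod (of_real (1 - (cmod a)\<^sup>2) :: complex)" by (simp only:)
  also have "\<dots> = \<bar>1 - (cmod a)\<^sup>2\<bar>" by (rule norm_of_real)
  finally have n1: "cmod (1 - cnj a * a) = 1 - (cmod a)\<^sup>2" using w_pos[OF a] by simp
  have n2: "1 - (cmod a)\<^sup>2 \<le> 2 * (1 - cmod a)"
  proof -
    have "0 \<le> (cmod a - 1) * (cmod a - 1)" by simp
    then show ?thesis by (simp add: power2_eq_square algebra_simps)
  qed
  have "cmod (cf m a r) = real (m choose r) * (1 - (cmod a)\<^sup>2) ^ (m - r) * cmod a ^ r"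
    unfolding cf_def by (simp add: norm_mult norm_power n1)
  also have "\<dots> \<le> real (m choose r) * (2 * (1 - cmod a)) ^ (m - r) * 1"
    using n2 w_pos[OF a] na by (intro mult_mono mult_left_mono power_mono power_le_one) auto
  also have "\<dots> = real (m choose r) * 2 ^ (m - r) * (1 - cmod a) ^ (m - r)"
    by (simp only: power_mult_distrib mult_1_right mult.assoc)
  finally show ?thesis .
qed

lemma psi_bloch:
  assumes a: "a \<in> D" and k: "1 \<le> k" and al: "0 \<le> \<alpha>" and nm: "\<alpha> + real n \<le> real m"
  shows "psi n m k a \<in> bloch_space \<alpha>"
        "bloch_norm \<alpha> (psi n m k a) \<le> Kpsi \<alpha> n m k * (1 - cmod a) powr (\<alpha> + real k - 1)"
proof -
  let ?e = "\<lambda>r z. cf m a r * ((z - a) ^ (k + r) / (1 - cnj a * z) ^ m)"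
  have eq: "psi n m k a = (\<lambda>z. \<Sum>r<n-k. ?e r z)"
    unfolding psi_def by (simp add: sum_divide_distrib)
  have t0: "0 < 1 - cmod a" using a by simp
  have rm: "\<And>r. r < n - k \<Longrightarrow> \<alpha> + real (k + r) - 1 \<le> real m" using nm by auto
  have e: "?e r \<in> bloch_space \<alpha> \<and> bloch_norm \<alpha> (?e r) \<le> real (m choose r) * 2 ^ (m - r) * (1 + 2 powr \<alpha> * (real (k + r) + real m)) * (1 - cmod a) powr (\<alpha> + real k - 1)"
    if r: "r < n - k" for r
  proof -
    have "1 \<le> real k" using k by simp
    then have "real r \<le> real m" using rm[OF r] al by simp
    then have rm': "r \<le> m" by simp
    note E = ep_bloch[OF a _ al rm[OF r]]
    have m1: "?e r \<in> bloch_space \<alpha>" using bloch_cmult(1)[OF E(1)] k by simp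
    have "bloch_norm \<alpha> (?e r) \<le> cmod (cf m a r) * bloch_norm \<alpha> (\<lambda>z. (z - a) ^ (k + r) / (1 - cnj a * z) ^ m)"
      using bloch_cmult(2)[OF E(1)] k by simp
    also have "\<dots> \<le> (real (m choose r) * 2 ^ (m - r) * (1 - cmod a) ^ (m - r)) *
        ((1 + 2 powr \<alpha> * (real (k + r) + real m)) * (1 - cmod a) powr (\<alpha> + real (k + r) - 1 - real m))"
      using cf_norm[OF a rm'] E(2) k bloch_norm_nonneg[OF E(1)] t0 by (intro mult_mono) auto
    also have "\<dots> = real (m choose r) * 2 ^ (m - r) * (1 + 2 powr \<alpha> * (real (k + r) + real m)) *
        ((1 - cmod a) ^ (m - r) * (1 - cmod a) powr (\<alpha> + real (k + r) - 1 - real m))"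
      by (simp add: algebra_simps)
    also have "(1 - cmod a) ^ (m - r) * (1 - cmod a) powr (\<alpha> + real (k + r) - 1 - real m) = (1 - cmod a) powr (\<alpha> + real k - 1)"
      using t0 rm' by (simp add: powr_realpow[symmetric] powr_add[symmetric] of_nat_diff algebra_simps)
    finally show ?thesis using m1 by simp
  qed
  have S: "(\<lambda>z. \<Sum>r<n-k. ?e r z) \<in> bloch_space \<alpha> \<and> bloch_norm \<alpha> (\<lambda>z. \<Sum>r<n-k. ?e r z) \<le> (\<Sum>r<n-k. bloch_norm \<alpha> (?e r))"
    using e by (intro bloch_sum) auto
  show "psi n m k a \<in> bloch_space \<alpha>" unfolding eq using S by blast
  have "bloch_norm \<alpha> (psi n m k a) \<le> (\<Sum>r<n-k. bloch_norm \<alpha> (?e r))" unfolding eq using S by blast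
  also have "\<dots> \<le> (\<Sum>r<n-k. real (m choose r) * 2 ^ (m - r) * (1 + 2 powr \<alpha> * (real (k + r) + real m)) * (1 - cmod a) powr (\<alpha> + real k - 1))"
    using e by (intro sum_mono) auto
  also have "\<dots> = Kpsi \<alpha> n m k * (1 - cmod a) powr (\<alpha> + real k - 1)"
    unfolding Kpsi_def by (simp add: sum_distrib_right)
  finally show "bloch_norm \<alpha> (psi n m k a) \<le> Kpsi \<alpha> n m k * (1 - cmod a) powr (\<alpha> + real k - 1)" .
qed


lemma higher_deriv_sum_D:
  assumes "finite S" "\<And>i. i \<in> S \<Longrightarrow> F i holomorphic_on D" "z \<in> D"
  shows "(deriv ^^ j) (\<lambda>w. \<Sum>i\<in>S. F i w) z = (\<Sum>i\<in>S. (deriv ^^ j) (F i) z)"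
  using assms
proof (induction S rule: finite_induct)
  case empty then show ?case by simp
next
  case (insert x S)
  have "(deriv ^^ j) (\<lambda>w. \<Sum>i\<in>insert x S. F i w) z = (deriv ^^ j) (\<lambda>w. F x w + (\<Sum>i\<in>S. F i w)) z"
    using insert by simp
  also have "\<dots> = (deriv ^^ j) (F x) z + (deriv ^^ j) (\<lambda>w. \<Sum>i\<in>S. F i w) z"
    using insert by (intro higher_deriv_add[of _ D]) (auto intro!: holomorphic_intros)
  finally show ?case using insert by simp
qed

lemma weight_div:
  assumes "z \<in> D" "(1 - (cmod z)\<^sup>2) powr a * x \<le> N"
  shows "x \<le> N * (1 - (cmod z)\<^sup>2) powr (-a)"
proof -
  have p: "0 < (1 - (cmod z)\<^sup>2) powr a" using w_pos[OF assms(1)] by simp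
  have "x = ((1 - (cmod z)\<^sup>2) powr a * x) * (1 - (cmod z)\<^sup>2) powr (-a)"
    using p by (simp add: powr_minus field_simps)
  also have "\<dots> \<le> N * (1 - (cmod z)\<^sup>2) powr (-a)"
    using assms(2) by (intro mult_right_mono) auto
  finally show ?thesis .
qed

lemma bloch_growth:
  assumes f: "f \<in> bloch_space \<alpha>" and al: "0 \<le> \<alpha>" and a: "a \<in> D" and k: "1 \<le> k"
  shows "cmod ((deriv ^^ k) f a) \<le> fact (k - 1) * bloch_norm \<alpha> f * ((1 - (cmod a)\<^sup>2) / 4) powr (-(\<alpha> + real k - 1))"
proof -
  obtain k' where k': "k = Suc k'" using k by (cases k) auto
  have hol: "f holomorphic_on D" using bloch_holo[OF f] .
  have "(deriv ^^ k) f a = (deriv ^^ k') (deriv f) a" unfolding k' by (simp add: funpow_Suc_right del: funpow.simps)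
  also have "cmod \<dots> \<le> fact k' * bloch_norm \<alpha> f * ((1 - (cmod a)\<^sup>2) / 4) powr (-(\<alpha> + real k'))"
  proof (rule cauchy_weighted[OF _ al bloch_norm_nonneg[OF f] _ a])
    show "deriv f holomorphic_on D" using hol by (intro holomorphic_deriv) auto
    fix w assume w: "w \<in> D"
    show "cmod (deriv f w) \<le> bloch_norm \<alpha> f * (1 - (cmod w)\<^sup>2) powr - \<alpha>"
      using weight_div[OF w bloch_upper_norm[OF f w]] .
  qed
  finally show ?thesis using k' by simp
qed

definition mm :: "real \<Rightarrow> nat \<Rightarrow> nat" where "mm \<alpha> n = 2 * n + nat \<lceil>\<alpha>\<rceil> + 1"

lemma mm_ge: "0 \<le> \<alpha> \<Longrightarrow> \<alpha> + real n + real n + 1 \<le> real (mm \<alpha> n)"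
  unfolding mm_def by (simp add: of_nat_nat)

definition Pop :: "real \<Rightarrow> nat \<Rightarrow> nat \<Rightarrow> complex \<Rightarrow> (complex \<Rightarrow> complex) \<Rightarrow> complex \<Rightarrow> complex" where
  "Pop \<alpha> n k a f = (if k = 0 then (\<lambda>z. f z - (\<Sum>i\<in>{1..<n}. ((deriv ^^ i) f a / fact i) * psi n (mm \<alpha> n) i a z))
                     else (\<lambda>z. ((deriv ^^ k) f a / fact k) * psi n (mm \<alpha> n) k a z))"

definition Ci :: "real \<Rightarrow> nat \<Rightarrow> nat \<Rightarrow> real" where
  "Ci \<alpha> n i = Kpsi \<alpha> n (mm \<alpha> n) i * 4 powr (\<alpha> + real i - 1)"

definition KP :: "real \<Rightarrow> nat \<Rightarrow> real" where
  "KP \<alpha> n = 1 + (\<Sum>i\<in>{1..<n}. Ci \<alpha> n i)"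

lemma Kpsi_nonneg: "0 \<le> Kpsi \<alpha> n m k"
  unfolding Kpsi_def by (intro sum_nonneg) auto

lemma Ci_nonneg: "0 \<le> Ci \<alpha> n i"
  unfolding Ci_def using Kpsi_nonneg by simp

lemma term_bound:
  assumes f: "f \<in> bloch_space \<alpha>" and al: "0 \<le> \<alpha>" and a: "a \<in> D" and i: "1 \<le> i"
  shows "(\<lambda>z. ((deriv ^^ i) f a / fact i) * psi n (mm \<alpha> n) i a z) \<in> bloch_space \<alpha>"
        "bloch_norm \<alpha> (\<lambda>z. ((deriv ^^ i) f a / fact i) * psi n (mm \<alpha> n) i a z) \<le> Ci \<alpha> n i * bloch_norm \<alpha> f"
proof -
  let ?m = "mm \<alpha> n"
  have nm: "\<alpha> + real n \<le> real ?m" using mm_ge[OF al, of n] by simp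
  note PS = psi_bloch[OF a i al nm]
  show "(\<lambda>z. ((deriv ^^ i) f a / fact i) * psi n ?m i a z) \<in> bloch_space \<alpha>"
    using bloch_cmult(1)[OF PS(1)] .
  define t where "t = 1 - cmod a"
  define E where "E = \<alpha> + real i - 1"
  have t0: "0 < t" using a unfolding t_def by simp
  have E0: "0 \<le> E" using al i unfolding E_def by simp
  have td: "t / 4 \<le> (1 - (cmod a)\<^sup>2) / 4" unfolding t_def using a
    by (simp add: power2_eq_square) (smt (verit) mult_left_le_one_le norm_ge_zero)
  have N0: "0 \<le> bloch_norm \<alpha> f" using bloch_norm_nonneg[OF f] .
  have fi: "fact (i - 1) / fact i \<le> (1::real)"
    using i by (simp add: fact_mono divide_le_eq_1)
  have "bloch_norm \<alpha> (\<lambda>z. ((deriv ^^ i) f a / fact i) * psi n ?m i a z)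
        \<le> cmod ((deriv ^^ i) f a / fact i) * bloch_norm \<alpha> (psi n ?m i a)"
    using bloch_cmult(2)[OF PS(1)] .
  also have "\<dots> \<le> (fact (i - 1) * bloch_norm \<alpha> f * ((1 - (cmod a)\<^sup>2) / 4) powr (-E) / fact i) *
                  (Kpsi \<alpha> n ?m i * t powr E)"
  proof (rule mult_mono)
    have g: "cmod ((deriv ^^ i) f a) \<le> fact (i - 1) * bloch_norm \<alpha> f * ((1 - (cmod a)\<^sup>2) / 4) powr (-E)"
      using bloch_growth[OF f al a i] unfolding E_def by simp
    have "cmod ((deriv ^^ i) f a / fact i) = cmod ((deriv ^^ i) f a) / fact i" by (simp add: norm_divide)
    also have "\<dots> \<le> fact (i - 1) * bloch_norm \<alpha> f * ((1 - (cmod a)\<^sup>2) / 4) powr (-E) / fact i"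
      using g by (intro divide_right_mono) auto
    finally show "cmod ((deriv ^^ i) f a / fact i) \<le> fact (i - 1) * bloch_norm \<alpha> f * ((1 - (cmod a)\<^sup>2) / 4) powr (-E) / fact i" .
    show "bloch_norm \<alpha> (psi n ?m i a) \<le> Kpsi \<alpha> n ?m i * t powr E" using PS(2) unfolding E_def t_def .
    show "0 \<le> bloch_norm \<alpha> (psi n ?m i a)" using bloch_norm_nonneg[OF PS(1)] .
    show "0 \<le> fact (i - 1) * bloch_norm \<alpha> f * ((1 - (cmod a)\<^sup>2) / 4) powr (-E) / fact i"
      using N0 by simp
  qed
  also have "\<dots> \<le> (bloch_norm \<alpha> f * (t / 4) powr (-E)) * (Kpsi \<alpha> n ?m i * t powr E)"
  proof (intro mult_right_mono)
    have "fact (i - 1) * bloch_norm \<alpha> f * ((1 - (cmod a)\<^sup>2) / 4) powr (-E) / fact i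
        = (fact (i - 1) / fact i) * (bloch_norm \<alpha> f * ((1 - (cmod a)\<^sup>2) / 4) powr (-E))" by simp
    also have "\<dots> \<le> 1 * (bloch_norm \<alpha> f * ((1 - (cmod a)\<^sup>2) / 4) powr (-E))"
      using fi N0 by (intro mult_right_mono) auto
    also have "\<dots> \<le> bloch_norm \<alpha> f * (t / 4) powr (-E)"
    proof -
      have "((1 - (cmod a)\<^sup>2) / 4) powr (-E) \<le> (t / 4) powr (-E)"
        using td t0 E0 by (intro powr_mono2') auto
      from mult_left_mono[OF this N0] show ?thesis by simp
    qed
    finally show "fact (i - 1) * bloch_norm \<alpha> f * ((1 - (cmod a)\<^sup>2) / 4) powr (-E) / fact i \<le> bloch_norm \<alpha> f * (t / 4) powr (-E)" .
  qed (use Kpsi_nonneg t0 in auto)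
  also have "\<dots> = bloch_norm \<alpha> f * Kpsi \<alpha> n ?m i * ((t / 4) powr (-E) * t powr E)" by (simp add: algebra_simps)
  also have "(t / 4) powr (-E) * t powr E = 4 powr E"
    using t0 by (simp add: powr_divide powr_minus field_simps)
  finally show "bloch_norm \<alpha> (\<lambda>z. ((deriv ^^ i) f a / fact i) * psi n ?m i a z) \<le> Ci \<alpha> n i * bloch_norm \<alpha> f"
    unfolding Ci_def E_def by (simp add: algebra_simps)
qed

lemma Pop_bloch:
  assumes f: "f \<in> bloch_space \<alpha>" and al: "0 \<le> \<alpha>" and a: "a \<in> D" and k: "k < n"
  shows "Pop \<alpha> n k a f \<in> bloch_space \<alpha>" "bloch_norm \<alpha> (Pop \<alpha> n k a f) \<le> KP \<alpha> n * bloch_norm \<alpha> f"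
proof -
  have N0: "0 \<le> bloch_norm \<alpha> f" using bloch_norm_nonneg[OF f] .
  have S: "(\<lambda>z. \<Sum>i\<in>{1..<n}. ((deriv ^^ i) f a / fact i) * psi n (mm \<alpha> n) i a z) \<in> bloch_space \<alpha> \<and>
       bloch_norm \<alpha> (\<lambda>z. \<Sum>i\<in>{1..<n}. ((deriv ^^ i) f a / fact i) * psi n (mm \<alpha> n) i a z)
        \<le> (\<Sum>i\<in>{1..<n}. bloch_norm \<alpha> (\<lambda>z. ((deriv ^^ i) f a / fact i) * psi n (mm \<alpha> n) i a z))"
    using term_bound(1)[OF f al a] by (intro bloch_sum) auto
  have S2: "(\<Sum>i\<in>{1..<n}. bloch_norm \<alpha> (\<lambda>z. ((deriv ^^ i) f a / fact i) * psi n (mm \<alpha> n) i a z))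
        \<le> (\<Sum>i\<in>{1..<n}. Ci \<alpha> n i) * bloch_norm \<alpha> f"
    unfolding sum_distrib_right using term_bound(2)[OF f al a] by (intro sum_mono) auto
  have "Pop \<alpha> n k a f \<in> bloch_space \<alpha> \<and> bloch_norm \<alpha> (Pop \<alpha> n k a f) \<le> KP \<alpha> n * bloch_norm \<alpha> f"
  proof (cases "k = 0")
    case True
    have e: "Pop \<alpha> n k a f = (\<lambda>z. f z - (\<Sum>i\<in>{1..<n}. ((deriv ^^ i) f a / fact i) * psi n (mm \<alpha> n) i a z))"
      by (simp only: Pop_def if_P[OF True])
    have Sin: "(\<lambda>z. \<Sum>i\<in>{1..<n}. ((deriv ^^ i) f a / fact i) * psi n (mm \<alpha> n) i a z) \<in> bloch_space \<alpha>"
      using S by blast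
    have "Pop \<alpha> n k a f \<in> bloch_space \<alpha>" unfolding e by (rule bloch_diff(1)[OF f Sin])
    moreover have "bloch_norm \<alpha> (Pop \<alpha> n k a f) \<le> KP \<alpha> n * bloch_norm \<alpha> f"
    proof -
      have "bloch_norm \<alpha> (Pop \<alpha> n k a f) \<le> bloch_norm \<alpha> f + bloch_norm \<alpha> (\<lambda>z. \<Sum>i\<in>{1..<n}. ((deriv ^^ i) f a / fact i) * psi n (mm \<alpha> n) i a z)"
        unfolding e by (rule bloch_diff(2)[OF f Sin])
      also have "\<dots> \<le> bloch_norm \<alpha> f + (\<Sum>i\<in>{1..<n}. Ci \<alpha> n i) * bloch_norm \<alpha> f"
        using S S2 by linarith
      also have "\<dots> = KP \<alpha> n * bloch_norm \<alpha> f" unfolding KP_def by (simp add: algebra_simps)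
      finally show ?thesis .
    qed
    ultimately show ?thesis by blast
  next
    case False
    then have k1: "1 \<le> k" by simp
    have "Ci \<alpha> n k \<le> (\<Sum>i\<in>{1..<n}. Ci \<alpha> n i)"
      using k k1 Ci_nonneg by (intro member_le_sum) auto
    then have "Ci \<alpha> n k * bloch_norm \<alpha> f \<le> KP \<alpha> n * bloch_norm \<alpha> f"
      unfolding KP_def using N0 by (intro mult_right_mono) auto
    moreover have e: "Pop \<alpha> n k a f = (\<lambda>z. ((deriv ^^ k) f a / fact k) * psi n (mm \<alpha> n) k a z)"
      by (simp only: Pop_def if_not_P[OF False])
    ultimately show ?thesis unfolding e using term_bound(1)[OF f al a k1, of n] term_bound(2)[OF f al a k1, of n]
      by auto
  qed
  then show "Pop \<alpha> n k a f \<in> bloch_space \<alpha>" "bloch_norm \<alpha> (Pop \<alpha> n k a f) \<le> KP \<alpha> n * bloch_norm \<alpha> f" by auto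
qed

lemma Pop_hderiv:
  assumes f: "f holomorphic_on D" and al: "0 \<le> \<alpha>" and a: "a \<in> D" and k: "k < n" and j: "j < n"
  shows "(deriv ^^ j) (Pop \<alpha> n k a f) a = (if j = k then (deriv ^^ k) f a else 0)"
proof -
  have nm: "n \<le> mm \<alpha> n" unfolding mm_def by simp
  have ps: "\<And>i. psi n (mm \<alpha> n) i a holomorphic_on D" using psi_holo[OF a] .
  show ?thesis
  proof (cases "k = 0")
    case False
    have e: "Pop \<alpha> n k a f = (\<lambda>z. ((deriv ^^ k) f a / fact k) * psi n (mm \<alpha> n) k a z)"
      by (simp only: Pop_def if_not_P[OF False])
    have "(deriv ^^ j) (Pop \<alpha> n k a f) a = ((deriv ^^ k) f a / fact k) * (deriv ^^ j) (psi n (mm \<alpha> n) k a) a"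
      unfolding e using a by (intro higher_deriv_cmult[OF ps]) auto
    also have "\<dots> = (if j = k then (deriv ^^ k) f a else 0)"
      using psi_hderiv[OF a _ nm j, of k] k by simp
    finally show ?thesis .
  next
    case True
    have "(deriv ^^ j) (Pop \<alpha> n k a f) a = (deriv ^^ j) f a -
       (deriv ^^ j) (\<lambda>z. \<Sum>i\<in>{1..<n}. ((deriv ^^ i) f a / fact i) * psi n (mm \<alpha> n) i a z) a"
    proof -
      have e: "Pop \<alpha> n k a f = (\<lambda>z. f z - (\<Sum>i\<in>{1..<n}. ((deriv ^^ i) f a / fact i) * psi n (mm \<alpha> n) i a z))"
        by (simp only: Pop_def if_P[OF True])
      show ?thesis unfolding e using a f ps by (intro higher_deriv_diff[of _ D]) (auto intro!: holomorphic_intros)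
    qed
    also have "(deriv ^^ j) (\<lambda>z. \<Sum>i\<in>{1..<n}. ((deriv ^^ i) f a / fact i) * psi n (mm \<alpha> n) i a z) a
       = (\<Sum>i\<in>{1..<n}. ((deriv ^^ i) f a / fact i) * (deriv ^^ j) (psi n (mm \<alpha> n) i a) a)"
    proof -
      have "(deriv ^^ j) (\<lambda>z. \<Sum>i\<in>{1..<n}. ((deriv ^^ i) f a / fact i) * psi n (mm \<alpha> n) i a z) a
         = (\<Sum>i\<in>{1..<n}. (deriv ^^ j) (\<lambda>z. ((deriv ^^ i) f a / fact i) * psi n (mm \<alpha> n) i a z) a)"
        using a ps by (intro higher_deriv_sum_D) (auto intro!: holomorphic_intros)
      also have "\<dots> = (\<Sum>i\<in>{1..<n}. ((deriv ^^ i) f a / fact i) * (deriv ^^ j) (psi n (mm \<alpha> n) i a) a)"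
        using a by (intro sum.cong refl higher_deriv_cmult[OF ps]) auto
      finally show ?thesis .
    qed
    also have "\<dots> = (\<Sum>i\<in>{1..<n}. if i = j then (deriv ^^ j) f a else 0)"
      using psi_hderiv[OF a _ nm j] by (intro sum.cong refl) auto
    also have "\<dots> = (if j \<in> {1..<n} then (deriv ^^ j) f a else 0)"
      by (simp add: sum.delta)
    finally show ?thesis using True j by auto
  qed
qed


definition cint :: "real \<Rightarrow> nat \<Rightarrow> nat \<Rightarrow> real" where
  "cint \<beta> n j = (\<Prod>i<j. 2 powr (\<beta> + real n - 2 - real i) / (\<beta> + real n - 2 - real i))"

lemma cint_nonneg: "0 < \<beta> \<Longrightarrow> j \<le> n - 1 \<Longrightarrow> 0 \<le> cint \<beta> n j"
  unfolding cint_def by (intro prod_nonneg) auto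

lemma iter_growth_aux:
  assumes h: "h holomorphic_on D" and b: "0 < \<beta>" and M: "0 \<le> M"
    and hb: "\<And>z. z \<in> D \<Longrightarrow> cmod (h z) \<le> M * (1 - (cmod z)\<^sup>2) powr (-(\<beta> + real n - 1))"
  shows "j \<le> n - 1 \<Longrightarrow> z \<in> D \<Longrightarrow> cmod ((integ_op ^^ j) h z) \<le> cint \<beta> n j * M * (1 - (cmod z)\<^sup>2) powr (-(\<beta> + real n - 1 - real j))"
proof (induction j arbitrary: z)
  case 0 then show ?case using hb by (simp add: cint_def)
next
  case (Suc j)
  have g: "1 < \<beta> + real n - 1 - real j" using Suc.prems b by auto
  have c0: "0 \<le> cint \<beta> n j * M" using cint_nonneg[OF b, of j n] Suc.prems M by simp
  have "cmod (integ_op ((integ_op ^^ j) h) z) \<le> cint \<beta> n j * M * 2 powr ((\<beta> + real n - 1 - real j) - 1) / ((\<beta> + real n - 1 - real j) - 1)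
           * (1 - (cmod z)\<^sup>2) powr (-((\<beta> + real n - 1 - real j) - 1))"
    by (rule integ_growth[OF iter_holo[OF h] g c0 _ Suc.prems(2)]) (use Suc.IH Suc.prems in auto)
  also have "\<dots> = cint \<beta> n (Suc j) * M * (1 - (cmod z)\<^sup>2) powr (-(\<beta> + real n - 1 - real (Suc j)))"
    unfolding cint_def by (simp add: algebra_simps)
  finally show ?case by simp
qed

lemma iter_growth:
  assumes h: "h holomorphic_on D" and b: "0 < \<beta>" and n: "0 < n" and M: "0 \<le> M"
    and hb: "\<And>z. z \<in> D \<Longrightarrow> cmod (h z) \<le> M * (1 - (cmod z)\<^sup>2) powr (-(\<beta> + real n - 1))"
  shows "(integ_op ^^ n) h \<in> bloch_space \<beta>" "bloch_norm \<beta> ((integ_op ^^ n) h) \<le> cint \<beta> n (n - 1) * M"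
proof -
  have hol: "(integ_op ^^ n) h holomorphic_on D" using iter_holo[OF h] .
  have bd: "(1 - (cmod z)\<^sup>2) powr \<beta> * cmod (deriv ((integ_op ^^ n) h) z) \<le> cint \<beta> n (n - 1) * M" if z: "z \<in> D" for z
  proof -
    have "cmod (deriv ((integ_op ^^ n) h) z) = cmod ((integ_op ^^ (n - 1)) h z)"
      using iter_deriv[OF h n z] by simp
    also have "\<dots> \<le> cint \<beta> n (n - 1) * M * (1 - (cmod z)\<^sup>2) powr (-(\<beta> + real n - 1 - real (n - 1)))"
      by (rule iter_growth_aux[OF h b M hb _ z]) auto
    also have "\<dots> = cint \<beta> n (n - 1) * M * (1 - (cmod z)\<^sup>2) powr (-\<beta>)"
      using n by (simp add: of_nat_diff)
    finally have "cmod (deriv ((integ_op ^^ n) h) z) \<le> cint \<beta> n (n - 1) * M * (1 - (cmod z)\<^sup>2) powr (-\<beta>)" .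
    then have "(1 - (cmod z)\<^sup>2) powr \<beta> * cmod (deriv ((integ_op ^^ n) h) z)
       \<le> (1 - (cmod z)\<^sup>2) powr \<beta> * (cint \<beta> n (n - 1) * M * (1 - (cmod z)\<^sup>2) powr (-\<beta>))"
      by (intro mult_left_mono) auto
    also have "\<dots> = cint \<beta> n (n - 1) * M"
      using w_pos[OF z] by (simp add: powr_minus field_simps)
    finally show ?thesis .
  qed
  show "(integ_op ^^ n) h \<in> bloch_space \<beta>" using bloch_bound_intro(1)[OF hol bd] .
  show "bloch_norm \<beta> ((integ_op ^^ n) h) \<le> cint \<beta> n (n - 1) * M"
    using bloch_bound_intro(2)[OF hol bd] iter_0[OF n] unfolding bloch_norm_def by simp
qed


definition uvec :: "nat \<Rightarrow> (nat \<Rightarrow> complex \<Rightarrow> complex) \<Rightarrow> (complex \<Rightarrow> complex) \<Rightarrow> complex \<Rightarrow> complex" where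
  "uvec n g f = (\<lambda>z. \<Sum>k<n. (deriv ^^ k) f z * g k z)"

lemma I_vec_uvec: "I_vec n g f = (integ_op ^^ n) (uvec n g f)"
  unfolding I_vec_def uvec_def ..

lemma uvec_holo:
  assumes "f holomorphic_on D" "\<And>k. k < n \<Longrightarrow> g k holomorphic_on D"
  shows "uvec n g f holomorphic_on D"
  unfolding uvec_def using assms by (intro holomorphic_intros holomorphic_higher_deriv) auto

lemma nk_holo:
  assumes "f holomorphic_on D" "g holomorphic_on D"
  shows "(\<lambda>z. (deriv ^^ k) f z * g z) holomorphic_on D"
  using assms by (intro holomorphic_intros holomorphic_higher_deriv) auto

lemma powr_quarter: "0 < (d::real) \<Longrightarrow> d powr E * (d / 4) powr (-E) = 4 powr E"
proof -
  assume d: "0 < d"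
  have "(d / 4) powr (-E) = inverse ((d / 4) powr E)" by (rule powr_minus)
  also have "\<dots> = inverse (d powr E / 4 powr E)" using d by (simp add: powr_divide)
  also have "\<dots> = 4 powr E / d powr E" by simp
  finally have "(d / 4) powr (-E) = 4 powr E / d powr E" .
  then show ?thesis using d by simp
qed

lemma key_ineq:
  assumes al: "0 \<le> \<alpha>" and b: "0 < \<beta>" and n: "0 < n" and gk: "\<And>k. k < n \<Longrightarrow> g k holomorphic_on D"
    and f: "f \<in> bloch_space \<alpha>" and a: "a \<in> D" and k: "k < n"
    and TP: "I_vec n g (Pop \<alpha> n k a f) \<in> bloch_space \<beta>"
  shows "(1 - (cmod a)\<^sup>2) powr (\<beta> + real n - 1) * cmod ((deriv ^^ k) f a * g k a)
          \<le> fact (n - 1) * 4 powr (\<beta> + real n - 1) * bloch_norm \<beta> (I_vec n g (Pop \<alpha> n k a f))"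
proof -
  let ?P = "Pop \<alpha> n k a f"
  let ?E = "\<beta> + real n - 1"
  have Pb: "?P \<in> bloch_space \<alpha>" using Pop_bloch(1)[OF f al a k] .
  have Ph: "?P holomorphic_on D" using bloch_holo[OF Pb] .
  have fh: "f holomorphic_on D" using bloch_holo[OF f] .
  have "(deriv ^^ n) (I_vec n g ?P) a = uvec n g ?P a"
    unfolding I_vec_uvec by (rule iter_hderiv[OF uvec_holo[OF Ph gk] a])
  also have "\<dots> = (\<Sum>j<n. (if j = k then (deriv ^^ k) f a else 0) * g j a)"
    unfolding uvec_def using Pop_hderiv[OF fh al a k] by (intro sum.cong refl) auto
  also have "\<dots> = (deriv ^^ k) f a * g k a"
  proof -
    have "(\<Sum>j<n. (if j = k then (deriv ^^ k) f a else 0) * g j a) = (\<Sum>j<n. if j = k then (deriv ^^ k) f a * g k a else 0)"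
      by (intro sum.cong refl) auto
    also have "\<dots> = (deriv ^^ k) f a * g k a" using k by (simp add: sum.delta)
    finally show ?thesis .
  qed
  finally have e: "(deriv ^^ n) (I_vec n g ?P) a = (deriv ^^ k) f a * g k a" .
  have bg: "cmod ((deriv ^^ n) (I_vec n g ?P) a) \<le> fact (n - 1) * bloch_norm \<beta> (I_vec n g ?P) * ((1 - (cmod a)\<^sup>2) / 4) powr (-?E)"
    using bloch_growth[OF TP _ a, of n] b n by simp
  have d0: "0 < 1 - (cmod a)\<^sup>2" using w_pos[OF a] .
  have "(1 - (cmod a)\<^sup>2) powr ?E * cmod ((deriv ^^ k) f a * g k a)
        \<le> (1 - (cmod a)\<^sup>2) powr ?E * (fact (n - 1) * bloch_norm \<beta> (I_vec n g ?P) * ((1 - (cmod a)\<^sup>2) / 4) powr (-?E))"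
    using bg e by (intro mult_left_mono) auto
  also have "\<dots> = fact (n - 1) * bloch_norm \<beta> (I_vec n g ?P) * ((1 - (cmod a)\<^sup>2) powr ?E * ((1 - (cmod a)\<^sup>2) / 4) powr (-?E))"
    by (simp add: algebra_simps)
  also have "(1 - (cmod a)\<^sup>2) powr ?E * ((1 - (cmod a)\<^sup>2) / 4) powr (-?E) = 4 powr ?E"
    using d0 by (rule powr_quarter)
  finally show ?thesis by (simp add: algebra_simps)
qed

definition CK :: "real \<Rightarrow> real \<Rightarrow> nat \<Rightarrow> real" where
  "CK \<alpha> \<beta> n = fact (n - 1) * 4 powr (\<beta> + real n - 1) * KP \<alpha> n"

lemma KP_nonneg: "0 \<le> KP \<alpha> n"
  unfolding KP_def using Ci_nonneg by (simp add: sum_nonneg add_nonneg_nonneg)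

lemma CK_nonneg: "0 \<le> CK \<alpha> \<beta> n"
  unfolding CK_def using KP_nonneg by simp

lemma bounded_imp_each:
  assumes al: "0 \<le> \<alpha>" and b: "0 < \<beta>" and n: "0 < n" and gk: "\<And>k. k < n \<Longrightarrow> g k holomorphic_on D"
    and T: "bounded_bloch_op \<alpha> \<beta> (I_vec n g)" and k: "k < n"
  shows "bounded_bloch_op \<alpha> \<beta> (I_nk n k (g k))"
proof -
  from T have Tin: "\<And>f. f \<in> bloch_space \<alpha> \<Longrightarrow> I_vec n g f \<in> bloch_space \<beta>"
    and "\<exists>C. \<forall>f\<in>bloch_space \<alpha>. bloch_norm \<beta> (I_vec n g f) \<le> C * bloch_norm \<alpha> f"
    unfolding bounded_bloch_op_def by auto
  then obtain C where C: "\<And>f. f \<in> bloch_space \<alpha> \<Longrightarrow> bloch_norm \<beta> (I_vec n g f) \<le> C * bloch_norm \<alpha> f" by blast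
  define C' where "C' = max C 0"
  have C': "\<And>f. f \<in> bloch_space \<alpha> \<Longrightarrow> bloch_norm \<beta> (I_vec n g f) \<le> C' * bloch_norm \<alpha> f"
    using C bloch_norm_nonneg unfolding C'_def by (smt (verit, best) mult_right_mono)
  have C'0: "0 \<le> C'" unfolding C'_def by simp
  define K where "K = cint \<beta> n (n - 1) * CK \<alpha> \<beta> n * C'"
  have main: "I_nk n k (g k) f \<in> bloch_space \<beta> \<and> bloch_norm \<beta> (I_nk n k (g k) f) \<le> K * bloch_norm \<alpha> f"
    if f: "f \<in> bloch_space \<alpha>" for f
  proof -
    let ?h = "\<lambda>z. (deriv ^^ k) f z * g k z"
    define M where "M = CK \<alpha> \<beta> n * C' * bloch_norm \<alpha> f"
    have M0: "0 \<le> M" unfolding M_def using CK_nonneg C'0 bloch_norm_nonneg[OF f] by simp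
    have hh: "?h holomorphic_on D" using nk_holo[OF bloch_holo[OF f] gk[OF k]] .
    have hb: "cmod (?h z) \<le> M * (1 - (cmod z)\<^sup>2) powr (-(\<beta> + real n - 1))" if z: "z \<in> D" for z
    proof (rule weight_div[OF z])
      have "(1 - (cmod z)\<^sup>2) powr (\<beta> + real n - 1) * cmod (?h z)
          \<le> fact (n - 1) * 4 powr (\<beta> + real n - 1) * bloch_norm \<beta> (I_vec n g (Pop \<alpha> n k z f))"
        by (rule key_ineq[OF al b n gk f z k Tin[OF Pop_bloch(1)[OF f al z k]]]) auto
      also have "\<dots> \<le> fact (n - 1) * 4 powr (\<beta> + real n - 1) * (C' * (KP \<alpha> n * bloch_norm \<alpha> f))"
      proof (intro mult_left_mono)
        have "bloch_norm \<beta> (I_vec n g (Pop \<alpha> n k z f)) \<le> C' * bloch_norm \<alpha> (Pop \<alpha> n k z f)"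
          by (rule C'[OF Pop_bloch(1)[OF f al z k]])
        also have "\<dots> \<le> C' * (KP \<alpha> n * bloch_norm \<alpha> f)"
          by (intro mult_left_mono Pop_bloch(2)[OF f al z k] C'0)
        finally show "bloch_norm \<beta> (I_vec n g (Pop \<alpha> n k z f)) \<le> C' * (KP \<alpha> n * bloch_norm \<alpha> f)" .
      qed auto
      also have "\<dots> = M" unfolding M_def CK_def by (simp add: algebra_simps)
      finally show "(1 - (cmod z)\<^sup>2) powr (\<beta> + real n - 1) * cmod (?h z) \<le> M" .
    qed
    have e: "I_nk n k (g k) f = (integ_op ^^ n) ?h" unfolding I_nk_def ..
    show ?thesis unfolding e using iter_growth[OF hh b n M0 hb] unfolding K_def M_def
      by (simp add: algebra_simps)
  qed
  then show ?thesis unfolding bounded_bloch_op_def by blast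
qed

lemma I_vec_sum_eq:
  assumes f: "f holomorphic_on D" and gk: "\<And>k. k < n \<Longrightarrow> g k holomorphic_on D"
  shows "\<forall>z\<in>D. I_vec n g f z = (\<Sum>k<n. I_nk n k (g k) f z)"
  unfolding I_vec_def I_nk_def
  by (rule iter_sum) (use nk_holo[OF f] gk in auto)

lemma each_imp_bounded:
  assumes gk: "\<And>k. k < n \<Longrightarrow> g k holomorphic_on D"
    and E: "\<forall>k<n. bounded_bloch_op \<alpha> \<beta> (I_nk n k (g k))"
  shows "bounded_bloch_op \<alpha> \<beta> (I_vec n g)"
proof -
  have "\<forall>k. \<exists>C. k < n \<longrightarrow> (\<forall>f\<in>bloch_space \<alpha>. I_nk n k (g k) f \<in> bloch_space \<beta> \<and> bloch_norm \<beta> (I_nk n k (g k) f) \<le> C * bloch_norm \<alpha> f)"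
    using E unfolding bounded_bloch_op_def by blast
  then obtain C where C: "\<And>k f. k < n \<Longrightarrow> f \<in> bloch_space \<alpha> \<Longrightarrow> I_nk n k (g k) f \<in> bloch_space \<beta> \<and> bloch_norm \<beta> (I_nk n k (g k) f) \<le> C k * bloch_norm \<alpha> f"
    by metis
  have main: "I_vec n g f \<in> bloch_space \<beta> \<and> bloch_norm \<beta> (I_vec n g f) \<le> (\<Sum>k<n. C k) * bloch_norm \<alpha> f"
    if f: "f \<in> bloch_space \<alpha>" for f
  proof -
    have eq: "\<forall>z\<in>D. I_vec n g f z = (\<Sum>k<n. I_nk n k (g k) f z)" using I_vec_sum_eq[OF bloch_holo[OF f] gk] .
    have S: "(\<lambda>z. \<Sum>k<n. I_nk n k (g k) f z) \<in> bloch_space \<beta> \<and>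
        bloch_norm \<beta> (\<lambda>z. \<Sum>k<n. I_nk n k (g k) f z) \<le> (\<Sum>k<n. bloch_norm \<beta> (I_nk n k (g k) f))"
      using C[OF _ f] by (intro bloch_sum) auto
    have "(\<Sum>k<n. bloch_norm \<beta> (I_nk n k (g k) f)) \<le> (\<Sum>k<n. C k * bloch_norm \<alpha> f)"
      using C[OF _ f] by (intro sum_mono) auto
    then show ?thesis using S bloch_cong[OF eq] by (simp add: sum_distrib_right)
  qed
  then show ?thesis unfolding bounded_bloch_op_def by blast
qed


lemma freq_subseq:
  assumes "frequently P sequentially"
  shows "\<exists>r::nat\<Rightarrow>nat. strict_mono r \<and> (\<forall>j. P (r j))"
proof -
  have "infinite {x. P x}" using assms by (simp add: frequently_cofinite[symmetric] cofinite_eq_sequentially)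
  from infinite_enumerate[OF this] show ?thesis by auto
qed

lemma bloch_norm_diff_cong:
  assumes "\<forall>z\<in>D. u z = v z"
  shows "bloch_norm b (u - h) = bloch_norm b (v - h)"
  by (rule bloch_cong(2)) (use assms in auto)

lemma compact_cong:
  assumes S: "compact_bloch_op a b S" and eq: "\<And>f. f \<in> bloch_space a \<Longrightarrow> \<forall>z\<in>D. T f z = S f z"
  shows "compact_bloch_op a b T"
  unfolding compact_bloch_op_def
proof (intro conjI ballI allI impI)
  fix f assume f: "f \<in> bloch_space a"
  then have "S f \<in> bloch_space b" using S unfolding compact_bloch_op_def by blast
  then show "T f \<in> bloch_space b" using bloch_cong(3)[OF eq[OF f]] by simp
next
  fix F :: "nat \<Rightarrow> complex \<Rightarrow> complex" assume F: "\<forall>j. F j \<in> bloch_space a \<and> bloch_norm a (F j) \<le> 1"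
  then obtain r :: "nat \<Rightarrow> nat" and h where r: "strict_mono r" "h \<in> bloch_space b" "(\<lambda>j. bloch_norm b (S (F (r j)) - h)) \<longlonglongrightarrow> 0"
    using S unfolding compact_bloch_op_def by meson
  have "(\<lambda>j. bloch_norm b (T (F (r j)) - h)) = (\<lambda>j. bloch_norm b (S (F (r j)) - h))"
    using F eq by (intro ext bloch_norm_diff_cong) auto
  then have "(\<lambda>j. bloch_norm b (T (F (r j)) - h)) \<longlonglongrightarrow> 0" using r(3) by simp
  then show "\<exists>(r::nat\<Rightarrow>nat) h. strict_mono r \<and> h \<in> bloch_space b \<and> (\<lambda>j. bloch_norm b (T (F (r j)) - h)) \<longlonglongrightarrow> 0"
    using r(1,2) by (intro exI[of _ r] exI[of _ h] conjI)
qed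

lemma compact_zero: "compact_bloch_op a b (\<lambda>f z. 0)"
  unfolding compact_bloch_op_def
proof (intro conjI ballI allI impI)
  show "(\<lambda>z. 0) \<in> bloch_space b" for f :: "complex \<Rightarrow> complex" using bloch_zero(1) .
  fix F :: "nat \<Rightarrow> complex \<Rightarrow> complex"
  have e: "(\<lambda>z::complex. 0::complex) - (\<lambda>z. 0) = (\<lambda>z. 0)" by auto
  show "\<exists>(r::nat\<Rightarrow>nat) h. strict_mono r \<and> h \<in> bloch_space b \<and> (\<lambda>j. bloch_norm b ((\<lambda>z. 0) - h)) \<longlonglongrightarrow> 0"
    by (intro exI[of _ id] exI[of _ "\<lambda>z. 0"]) (auto simp: strict_mono_def e bloch_zero)
qed

lemma fun_diff_add:
  fixes u v h1 h2 :: "complex \<Rightarrow> complex"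
  shows "(\<lambda>z. u z + v z) - (\<lambda>z. h1 z + h2 z) = (\<lambda>z. (u - h1) z + (v - h2) z)"
  by (simp add: fun_eq_iff algebra_simps)

lemma compact_add:
  assumes S: "compact_bloch_op a b S" and T: "compact_bloch_op a b T"
  shows "compact_bloch_op a b (\<lambda>f z. S f z + T f z)"
  unfolding compact_bloch_op_def
proof (intro conjI ballI allI impI)
  fix f assume f: "f \<in> bloch_space a"
  then show "(\<lambda>z. S f z + T f z) \<in> bloch_space b"
    using S T unfolding compact_bloch_op_def by (intro bloch_add(1)) auto
next
  fix F :: "nat \<Rightarrow> complex \<Rightarrow> complex" assume F: "\<forall>j. F j \<in> bloch_space a \<and> bloch_norm a (F j) \<le> 1"
  then obtain r1 :: "nat \<Rightarrow> nat" and h1 where r1: "strict_mono r1" "h1 \<in> bloch_space b" "(\<lambda>j. bloch_norm b (S (F (r1 j)) - h1)) \<longlonglongrightarrow> 0"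
    using S unfolding compact_bloch_op_def by meson
  have F': "\<forall>j. (F \<circ> r1) j \<in> bloch_space a \<and> bloch_norm a ((F \<circ> r1) j) \<le> 1" using F by simp
  then obtain r2 :: "nat \<Rightarrow> nat" and h2 where r2: "strict_mono r2" "h2 \<in> bloch_space b" "(\<lambda>j. bloch_norm b (T ((F \<circ> r1) (r2 j)) - h2)) \<longlonglongrightarrow> 0"
    using T unfolding compact_bloch_op_def by meson
  define r where "r = r1 \<circ> r2"
  have rm: "strict_mono r" unfolding r_def using r1(1) r2(1) by (rule strict_mono_o)
  have l1: "(\<lambda>j. bloch_norm b (S (F (r j)) - h1)) \<longlonglongrightarrow> 0"
    using LIMSEQ_subseq_LIMSEQ[OF r1(3) r2(1)] unfolding r_def by (simp add: o_def)
  have l2: "(\<lambda>j. bloch_norm b (T (F (r j)) - h2)) \<longlonglongrightarrow> 0"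
    using r2(3) unfolding r_def by (simp add: o_def)
  have Sin: "\<And>j. S (F j) \<in> bloch_space b" and Tin: "\<And>j. T (F j) \<in> bloch_space b"
    using S T F unfolding compact_bloch_op_def by auto
  have d1: "\<And>j. S (F (r j)) - h1 \<in> bloch_space b" using bloch_diff(1)[OF Sin r1(2)] by (simp add: fun_diff_def)
  have d2: "\<And>j. T (F (r j)) - h2 \<in> bloch_space b" using bloch_diff(1)[OF Tin r2(2)] by (simp add: fun_diff_def)
  have le: "bloch_norm b ((\<lambda>z. S (F (r j)) z + T (F (r j)) z) - (\<lambda>z. h1 z + h2 z))
      \<le> bloch_norm b (S (F (r j)) - h1) + bloch_norm b (T (F (r j)) - h2)" for j
    unfolding fun_diff_add by (rule bloch_add(2)[OF d1 d2])
  have ge: "0 \<le> bloch_norm b ((\<lambda>z. S (F (r j)) z + T (F (r j)) z) - (\<lambda>z. h1 z + h2 z))" for j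
    unfolding fun_diff_add by (rule bloch_norm_nonneg[OF bloch_add(1)[OF d1 d2]])
  have "(\<lambda>j. bloch_norm b ((\<lambda>z. S (F (r j)) z + T (F (r j)) z) - (\<lambda>z. h1 z + h2 z))) \<longlonglongrightarrow> 0"
    by (rule real_tendsto_sandwich[OF _ _ tendsto_const tendsto_add_zero[OF l1 l2]])
       (use le ge in auto)
  then show "\<exists>(r::nat\<Rightarrow>nat) h. strict_mono r \<and> h \<in> bloch_space b \<and> (\<lambda>j. bloch_norm b ((\<lambda>z. S (F (r j)) z + T (F (r j)) z) - h)) \<longlonglongrightarrow> 0"
    using rm bloch_add(1)[OF r1(2) r2(2)] by blast
qed

lemma compact_sum:
  fixes N :: nat
  assumes "\<And>k. k < N \<Longrightarrow> compact_bloch_op a b (S k)"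
  shows "compact_bloch_op a b (\<lambda>f z. \<Sum>k<N. S k f z)"
  using assms
proof (induction N)
  case 0 then show ?case using compact_zero by simp
next
  case (Suc N)
  have "compact_bloch_op a b (\<lambda>f z. (\<Sum>k<N. S k f z) + S N f z)"
    using Suc by (intro compact_add) auto
  then show ?case by simp
qed

lemma each_imp_compact:
  assumes gk: "\<And>k. k < n \<Longrightarrow> g k holomorphic_on D"
    and E: "\<forall>k<n. compact_bloch_op \<alpha> \<beta> (I_nk n k (g k))"
  shows "compact_bloch_op \<alpha> \<beta> (I_vec n g)"
proof (rule compact_cong)
  show "compact_bloch_op \<alpha> \<beta> (\<lambda>f z. \<Sum>k<n. I_nk n k (g k) f z)"
    using E by (intro compact_sum) auto
  show "\<forall>z\<in>D. I_vec n g f z = (\<Sum>k<n. I_nk n k (g k) f z)" if "f \<in> bloch_space \<alpha>" for f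
    using I_vec_sum_eq[OF bloch_holo[OF that] gk] .
qed


definition locnull :: "(nat \<Rightarrow> complex \<Rightarrow> complex) \<Rightarrow> bool" where
  "locnull G \<longleftrightarrow> (\<forall>\<rho><1. \<forall>\<epsilon>>0. eventually (\<lambda>j. \<forall>z. cmod z \<le> \<rho> \<longrightarrow> cmod (G j z) \<le> \<epsilon>) sequentially)"

lemma locnullD: "locnull G \<Longrightarrow> \<rho> < 1 \<Longrightarrow> 0 < \<epsilon> \<Longrightarrow> eventually (\<lambda>j. \<forall>z. cmod z \<le> \<rho> \<longrightarrow> cmod (G j z) \<le> \<epsilon>) sequentially"
  unfolding locnull_def by blast

lemma locnullI: "(\<And>\<rho> \<epsilon>. \<rho> < 1 \<Longrightarrow> 0 < \<epsilon> \<Longrightarrow> eventually (\<lambda>j. \<forall>z. cmod z \<le> \<rho> \<longrightarrow> cmod (G j z) \<le> \<epsilon>) sequentially) \<Longrightarrow> locnull G"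
  unfolding locnull_def by blast

lemma locnull_pointwise:
  assumes "locnull G" "z \<in> D"
  shows "(\<lambda>j. G j z) \<longlonglongrightarrow> 0"
proof (rule tendstoI)
  fix e :: real assume e: "0 < e"
  have "cmod z < 1" using assms by simp
  from locnullD[OF assms(1) this, of "e/2"] e
  have "eventually (\<lambda>j. cmod (G j z) \<le> e/2) sequentially" by (auto elim!: eventually_mono)
  then show "eventually (\<lambda>j. dist (G j z) 0 < e) sequentially" using e by (auto elim!: eventually_mono)
qed

lemma locnull_subseq: "locnull G \<Longrightarrow> strict_mono s \<Longrightarrow> locnull (\<lambda>j. G (s j))"
  unfolding locnull_def using eventually_subseq by blast

lemma locnull_cmult: "locnull G \<Longrightarrow> locnull (\<lambda>j z. c * G j z)"
proof (rule locnullI)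
  fix \<rho> \<epsilon> :: real assume G: "locnull G" and r: "\<rho> < 1" and e: "0 < \<epsilon>"
  have "0 < cmod c + 1" using norm_ge_zero[of c] by linarith
  then have pos: "0 < \<epsilon> / (cmod c + 1)" using e by (intro divide_pos_pos)
  from locnullD[OF G r pos]
  have "eventually (\<lambda>j. \<forall>z. cmod z \<le> \<rho> \<longrightarrow> cmod (G j z) \<le> \<epsilon> / (cmod c + 1)) sequentially" .
  then show "eventually (\<lambda>j. \<forall>z. cmod z \<le> \<rho> \<longrightarrow> cmod (c * G j z) \<le> \<epsilon>) sequentially"
  proof (rule eventually_mono, intro allI impI)
    fix j z assume h: "\<forall>z. cmod z \<le> \<rho> \<longrightarrow> cmod (G j z) \<le> \<epsilon> / (cmod c + 1)" and z: "cmod z \<le> \<rho>"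
    have "cmod (G j z) \<le> \<epsilon> / (cmod c + 1)" using h z by blast
    then have "cmod c * cmod (G j z) \<le> cmod c * (\<epsilon> / (cmod c + 1))" by (rule mult_left_mono) simp
    then have "cmod (c * G j z) \<le> cmod c * (\<epsilon> / (cmod c + 1))" by (simp only: norm_mult)
    also have "\<dots> = \<epsilon> * (cmod c / (cmod c + 1))" by simp
    also have "\<dots> \<le> \<epsilon> * 1"
    proof (rule mult_left_mono)
      have "0 < cmod c + 1" using norm_ge_zero[of c] by linarith
      then show "cmod c / (cmod c + 1) \<le> 1" by (simp add: divide_le_eq_1)
    qed (use e in auto)
    finally show "cmod (c * G j z) \<le> \<epsilon>" by simp
  qed
qed

lemma locnull_add: "locnull G \<Longrightarrow> locnull H \<Longrightarrow> locnull (\<lambda>j z. G j z + H j z)"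
proof (rule locnullI)
  fix \<rho> \<epsilon> :: real assume G: "locnull G" and H: "locnull H" and r: "\<rho> < 1" and e: "0 < \<epsilon>"
  have "eventually (\<lambda>j. (\<forall>z. cmod z \<le> \<rho> \<longrightarrow> cmod (G j z) \<le> \<epsilon>/2) \<and> (\<forall>z. cmod z \<le> \<rho> \<longrightarrow> cmod (H j z) \<le> \<epsilon>/2)) sequentially"
    using locnullD[OF G r, of "\<epsilon>/2"] locnullD[OF H r, of "\<epsilon>/2"] e by (intro eventually_conj) auto
  then show "eventually (\<lambda>j. \<forall>z. cmod z \<le> \<rho> \<longrightarrow> cmod (G j z + H j z) \<le> \<epsilon>) sequentially"
  proof (rule eventually_mono, intro allI impI)
    fix j z assume h: "(\<forall>z. cmod z \<le> \<rho> \<longrightarrow> cmod (G j z) \<le> \<epsilon>/2) \<and> (\<forall>z. cmod z \<le> \<rho> \<longrightarrow> cmod (H j z) \<le> \<epsilon>/2)"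
      and z: "cmod z \<le> \<rho>"
    have "cmod (G j z + H j z) \<le> cmod (G j z) + cmod (H j z)" by (rule norm_triangle_ineq)
    also have "\<dots> \<le> \<epsilon>" using h z by fastforce
    finally show "cmod (G j z + H j z) \<le> \<epsilon>" .
  qed
qed

lemma locnull_diff: "locnull G \<Longrightarrow> locnull H \<Longrightarrow> locnull (\<lambda>j z. G j z - H j z)"
  using locnull_add[of G "\<lambda>j z. (-1) * H j z"] locnull_cmult[of H "-1"] by simp

lemma locnull_sum:
  assumes "finite S" "\<And>i. i \<in> S \<Longrightarrow> locnull (G i)"
  shows "locnull (\<lambda>j z. \<Sum>i\<in>S. G i j z)"
  using assms
proof (induction S rule: finite_induct)
  case empty
  show ?case by (rule locnullI) simp
next
  case (insert x S)
  then have "locnull (\<lambda>j z. G x j z + (\<Sum>i\<in>S. G i j z))" by (intro locnull_add) auto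
  then show ?case using insert by simp
qed

lemma cont_bounded_cball:
  assumes "continuous_on D h" "\<rho> < 1"
  shows "\<exists>B. \<forall>z. cmod z \<le> \<rho> \<longrightarrow> cmod (h z) \<le> B"
proof -
  have sub: "cball 0 \<rho> \<subseteq> D" using assms(2) by auto
  have "compact (h ` cball 0 \<rho>)"
    using continuous_on_subset[OF assms(1) sub] by (intro compact_continuous_image) auto
  then have "bounded (h ` cball 0 \<rho>)" by (rule compact_imp_bounded)
  then obtain B where B: "\<forall>x\<in>h ` cball 0 \<rho>. cmod x \<le> B" unfolding bounded_iff by blast
  show ?thesis
  proof (intro exI allI impI)
    fix z :: complex assume "cmod z \<le> \<rho>"
    then have "z \<in> cball 0 \<rho>" by simp
    then show "cmod (h z) \<le> B" using B by blast
  qed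
qed

lemma locnull_mult:
  assumes G: "locnull G" and h: "continuous_on D h"
  shows "locnull (\<lambda>j z. G j z * h z)"
proof (rule locnullI)
  fix \<rho> \<epsilon> :: real assume r: "\<rho> < 1" and e: "0 < \<epsilon>"
  obtain B where B: "\<And>z. cmod z \<le> \<rho> \<Longrightarrow> cmod (h z) \<le> B" using cont_bounded_cball[OF h r] by blast
  define B' where "B' = max B 0 + 1"
  have B'0: "0 < B'" unfolding B'_def by simp
  from locnullD[OF G r, of "\<epsilon> / B'"] e B'0
  have "eventually (\<lambda>j. \<forall>z. cmod z \<le> \<rho> \<longrightarrow> cmod (G j z) \<le> \<epsilon> / B') sequentially" by simp
  then show "eventually (\<lambda>j. \<forall>z. cmod z \<le> \<rho> \<longrightarrow> cmod (G j z * h z) \<le> \<epsilon>) sequentially"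
  proof (rule eventually_mono, intro allI impI)
    fix j z assume hh: "\<forall>z. cmod z \<le> \<rho> \<longrightarrow> cmod (G j z) \<le> \<epsilon> / B'" and z: "cmod z \<le> \<rho>"
    have hz: "cmod (h z) \<le> B'" using B[OF z] unfolding B'_def by simp
    have "cmod (G j z * h z) \<le> (\<epsilon> / B') * B'"
      unfolding norm_mult using hh z hz e B'0 by (intro mult_mono) auto
    also have "\<dots> = \<epsilon>" using B'0 by simp
    finally show "cmod (G j z * h z) \<le> \<epsilon>" .
  qed
qed

lemma locnull_deriv:
  assumes hol: "\<And>j. G j holomorphic_on D" and G: "locnull G"
  shows "locnull (\<lambda>j. (deriv ^^ k) (G j))"
proof (cases "k = 0")
  case True then show ?thesis using G by simp
next
  case False
  show ?thesis
  proof (rule locnullI)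
    fix \<rho> \<epsilon> :: real assume r: "\<rho> < 1" and e: "0 < \<epsilon>"
    define \<rho>0 where "\<rho>0 = max \<rho> 0"
    define R where "R = (1 - \<rho>0) / 2"
    have R0: "0 < R" unfolding R_def \<rho>0_def using r by simp
    have "\<rho>0 < 1" unfolding \<rho>0_def using r by simp
    then have r1: "\<rho>0 + R < 1" unfolding R_def by (simp add: field_simps)
    define e' where "e' = \<epsilon> * R ^ k / (2 * fact k)"
    have e'0: "0 < e'" unfolding e'_def using e R0 by simp
    from locnullD[OF G r1 e'0]
    have "eventually (\<lambda>j. \<forall>z. cmod z \<le> \<rho>0 + R \<longrightarrow> cmod (G j z) \<le> e') sequentially" .
    then show "eventually (\<lambda>j. \<forall>z. cmod z \<le> \<rho> \<longrightarrow> cmod ((deriv ^^ k) (G j) z) \<le> \<epsilon>) sequentially"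
    proof (rule eventually_mono, intro allI impI)
      fix j z assume hh: "\<forall>z. cmod z \<le> \<rho>0 + R \<longrightarrow> cmod (G j z) \<le> e'" and z: "cmod z \<le> \<rho>"
      have inc: "cball z R \<subseteq> D"
      proof
        fix w assume "w \<in> cball z R"
        then have "cmod w \<le> cmod z + R" using norm_triangle_sub[of w z] by (auto simp: dist_norm norm_minus_commute)
        then show "w \<in> D" using z r1 unfolding \<rho>0_def by auto
      qed
      have "cmod ((deriv ^^ k) (G j) z) \<le> fact k * (2 * e') / R ^ k"
      proof (rule Cauchy_higher_deriv_bound[where y=0])
        show "G j holomorphic_on ball z R" using hol inc by (meson ball_subset_cball holomorphic_on_subset subset_trans)
        show "continuous_on (cball z R) (G j)" using hol inc by (meson holomorphic_on_imp_continuous_on holomorphic_on_subset)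
        fix w assume w: "w \<in> ball z R"
        have "cmod w \<le> cmod z + R" using w norm_triangle_sub[of w z] by (auto simp: dist_norm norm_minus_commute)
        then have "cmod w \<le> \<rho>0 + R" using z unfolding \<rho>0_def by auto
        then have "cmod (G j w) \<le> e'" using hh by blast
        then show "G j w \<in> ball 0 (2 * e')" using e'0 by simp
      qed (use R0 False in auto)
      also have "\<dots> = \<epsilon>" unfolding e'_def using R0 by simp
      finally show "cmod ((deriv ^^ k) (G j) z) \<le> \<epsilon>" .
    qed
  qed
qed

lemma locnull_integ:
  assumes hol: "\<And>j. U j holomorphic_on D" and U: "locnull U"
  shows "locnull (\<lambda>j. integ_op (U j))"
proof (rule locnullI)
  fix \<rho> \<epsilon> :: real assume r: "\<rho> < 1" and e: "0 < \<epsilon>"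
  from locnullD[OF U r e]
  show "eventually (\<lambda>j. \<forall>z. cmod z \<le> \<rho> \<longrightarrow> cmod (integ_op (U j) z) \<le> \<epsilon>) sequentially"
  proof (rule eventually_mono, intro allI impI)
    fix j z assume hh: "\<forall>z. cmod z \<le> \<rho> \<longrightarrow> cmod (U j z) \<le> \<epsilon>" and z: "cmod z \<le> \<rho>"
    have zD: "z \<in> D" using z r by simp
    have "cmod (integ_op (U j) z) \<le> \<epsilon> * cmod z"
    proof (rule integ_op_bound[OF hol zD])
      fix w assume "w \<in> closed_segment 0 z"
      then have "cmod w \<le> cmod z" using segment_bound(1)[of w 0 z] by simp
      then show "cmod (U j w) \<le> \<epsilon>" using hh z by auto
    qed (use e in auto)
    also have "\<dots> \<le> \<epsilon>" using zD e by (simp add: mult_left_le)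
    finally show "cmod (integ_op (U j) z) \<le> \<epsilon>" .
  qed
qed

lemma locnull_iter:
  assumes hol: "\<And>j. U j holomorphic_on D" and U: "locnull U"
  shows "locnull (\<lambda>j. (integ_op ^^ m) (U j))"
proof (induction m)
  case 0 then show ?case using U by simp
next
  case (Suc m)
  have "locnull (\<lambda>j. integ_op ((integ_op ^^ m) (U j)))"
    using Suc iter_holo[OF hol] by (intro locnull_integ) auto
  then show ?case by simp
qed

lemma locnull_Ivec:
  assumes gk: "\<And>k. k < n \<Longrightarrow> g k holomorphic_on D" and hol: "\<And>j. G j holomorphic_on D" and G: "locnull G"
  shows "locnull (\<lambda>j. I_vec n g (G j))"
proof -
  have u: "locnull (\<lambda>j. uvec n g (G j))"
    unfolding uvec_def
    by (intro locnull_sum locnull_mult locnull_deriv[OF hol G] holomorphic_on_imp_continuous_on gk) auto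
  show ?thesis unfolding I_vec_uvec
    by (rule locnull_iter[OF _ u]) (intro uvec_holo hol gk, auto)
qed


lemma Ivec_cong:
  assumes "\<forall>z\<in>D. f z = f' z"
  shows "\<forall>z\<in>D. I_vec n g f z = I_vec n g f' z"
proof -
  have "\<forall>z\<in>D. uvec n g f z = uvec n g f' z"
    unfolding uvec_def using hderiv_eqD[OF assms] by simp
  then show ?thesis unfolding I_vec_uvec by (rule iter_cong)
qed

lemma Ivec_cmult:
  assumes f: "f holomorphic_on D" and gk: "\<And>k. k < n \<Longrightarrow> g k holomorphic_on D"
  shows "\<forall>z\<in>D. I_vec n g (\<lambda>w. c * f w) z = c * I_vec n g f z"
proof -
  have "\<forall>z\<in>D. uvec n g (\<lambda>w. c * f w) z = c * uvec n g f z"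
  proof
    fix z assume z: "z \<in> D"
    have "uvec n g (\<lambda>w. c * f w) z = (\<Sum>k<n. c * ((deriv ^^ k) f z * g k z))"
      unfolding uvec_def using higher_deriv_cmult[OF f z] by (simp add: mult.assoc)
    then show "uvec n g (\<lambda>w. c * f w) z = c * uvec n g f z"
      unfolding uvec_def by (simp add: sum_distrib_left)
  qed
  then have "\<forall>z\<in>D. (integ_op ^^ n) (uvec n g (\<lambda>w. c * f w)) z = (integ_op ^^ n) (\<lambda>w. c * uvec n g f w) z"
    by (rule iter_cong)
  moreover have "\<forall>z\<in>D. (integ_op ^^ n) (\<lambda>w. c * uvec n g f w) z = c * (integ_op ^^ n) (uvec n g f) z"
    by (rule iter_cmult[OF uvec_holo[OF f gk]])
  ultimately show ?thesis unfolding I_vec_uvec by simp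
qed

lemma Ivec_scale_norm:
  assumes f: "f \<in> bloch_space \<alpha>" and gk: "\<And>k. k < n \<Longrightarrow> g k holomorphic_on D"
    and Tin: "\<And>f. f \<in> bloch_space \<alpha> \<Longrightarrow> I_vec n g f \<in> bloch_space \<beta>" and d: "0 < d"
  shows "bloch_norm \<beta> (I_vec n g f) \<le> d * bloch_norm \<beta> (I_vec n g (\<lambda>z. of_real (1 / d) * f z))"
proof -
  let ?F = "\<lambda>z. of_real (1 / d) * f z"
  have F: "?F \<in> bloch_space \<alpha>" using bloch_cmult(1)[OF f] .
  have e1: "\<forall>z\<in>D. f z = d * ?F z" using d by simp
  have "\<forall>z\<in>D. I_vec n g f z = I_vec n g (\<lambda>w. d * ?F w) z" using Ivec_cong[OF e1] .
  moreover have "\<forall>z\<in>D. I_vec n g (\<lambda>w. d * ?F w) z = d * I_vec n g ?F z"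
    using Ivec_cmult[OF bloch_holo[OF F] gk] .
  ultimately have e: "\<forall>z\<in>D. I_vec n g f z = d * I_vec n g ?F z" by simp
  have "bloch_norm \<beta> (I_vec n g f) = bloch_norm \<beta> (\<lambda>z. complex_of_real d * I_vec n g ?F z)"
    using bloch_cong(2)[OF e] .
  also have "\<dots> \<le> cmod (complex_of_real d) * bloch_norm \<beta> (I_vec n g ?F)"
    using bloch_cmult(2)[OF Tin[OF F]] .
  also have "\<dots> = d * bloch_norm \<beta> (I_vec n g ?F)" using d by simp
  finally show ?thesis .
qed

lemma norm_le_diff_plus:
  assumes "u \<in> bloch_space b" "h \<in> bloch_space b"
  shows "bloch_norm b u \<le> bloch_norm b (u - h) + bloch_norm b h"
proof -
  have d: "u - h \<in> bloch_space b" using bloch_diff(1)[OF assms] by (simp add: fun_diff_def)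
  have e: "(\<lambda>z. (u - h) z + h z) = u" by auto
  show ?thesis using bloch_add(2)[OF d assms(2)] unfolding e .
qed

lemma compact_imp_bounded:
  assumes al: "0 \<le> \<alpha>" and gk: "\<And>k. k < n \<Longrightarrow> g k holomorphic_on D"
    and C: "compact_bloch_op \<alpha> \<beta> (I_vec n g)"
  shows "bounded_bloch_op \<alpha> \<beta> (I_vec n g)"
proof -
  have Tin: "\<And>f. f \<in> bloch_space \<alpha> \<Longrightarrow> I_vec n g f \<in> bloch_space \<beta>"
    using C unfolding compact_bloch_op_def by blast
  have "\<exists>C. \<forall>f\<in>bloch_space \<alpha>. bloch_norm \<beta> (I_vec n g f) \<le> C * bloch_norm \<alpha> f"
  proof (rule ccontr)
    assume nb: "\<not> ?thesis"
    have ex: "\<exists>F. F \<in> bloch_space \<alpha> \<and> bloch_norm \<alpha> F \<le> 1 \<and> real j / 2 \<le> bloch_norm \<beta> (I_vec n g F)" for j :: nat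
    proof -
      have "\<not> (\<forall>f\<in>bloch_space \<alpha>. bloch_norm \<beta> (I_vec n g f) \<le> real j * bloch_norm \<alpha> f)"
      proof
        assume "\<forall>f\<in>bloch_space \<alpha>. bloch_norm \<beta> (I_vec n g f) \<le> real j * bloch_norm \<alpha> f"
        then have "\<exists>C. \<forall>f\<in>bloch_space \<alpha>. bloch_norm \<beta> (I_vec n g f) \<le> C * bloch_norm \<alpha> f" by (rule exI)
        with nb show False by contradiction
      qed
      then obtain f where f: "f \<in> bloch_space \<alpha>" and fj: "real j * bloch_norm \<alpha> f < bloch_norm \<beta> (I_vec n g f)"
        by (auto simp: not_le)
      have N0: "0 \<le> bloch_norm \<alpha> f" using bloch_norm_nonneg[OF f] .
      have "0 \<le> real j * bloch_norm \<alpha> f" using N0 by simp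
      then have T0: "0 < bloch_norm \<beta> (I_vec n g f)" using fj by linarith
      define d where "d = bloch_norm \<alpha> f + bloch_norm \<beta> (I_vec n g f) / (real j + 1)"
      have d0: "0 < d" unfolding d_def using N0 T0 by (simp add: add_nonneg_pos)
      let ?F = "\<lambda>z. of_real (1 / d) * f z"
      have F: "?F \<in> bloch_space \<alpha>" using bloch_cmult(1)[OF f] .
      have "bloch_norm \<alpha> ?F \<le> cmod (complex_of_real (1 / d)) * bloch_norm \<alpha> f" using bloch_cmult(2)[OF f] .
      also have "\<dots> = bloch_norm \<alpha> f / d" using d0 by (simp add: norm_divide)
      also have "\<dots> \<le> 1" using d0 N0 T0 unfolding d_def by (simp add: divide_le_eq_1)
      finally have F1: "bloch_norm \<alpha> ?F \<le> 1" .
      have sc: "bloch_norm \<beta> (I_vec n g f) \<le> d * bloch_norm \<beta> (I_vec n g ?F)"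
        using Ivec_scale_norm[OF f gk Tin d0] by simp
      have "real j * d \<le> 2 * bloch_norm \<beta> (I_vec n g f)"
      proof -
        have "real j * d = real j * bloch_norm \<alpha> f + (real j / (real j + 1)) * bloch_norm \<beta> (I_vec n g f)"
          unfolding d_def by (simp add: algebra_simps)
        also have "(real j / (real j + 1)) * bloch_norm \<beta> (I_vec n g f) \<le> 1 * bloch_norm \<beta> (I_vec n g f)"
          using T0 by (intro mult_right_mono) auto
        finally show ?thesis using fj by linarith
      qed
      then have "d * real j \<le> d * (2 * bloch_norm \<beta> (I_vec n g ?F))"
        using sc by (simp add: algebra_simps)
      then have "real j \<le> 2 * bloch_norm \<beta> (I_vec n g ?F)" using d0 by (simp only: mult_le_cancel_left_pos)
      then have "real j / 2 \<le> bloch_norm \<beta> (I_vec n g ?F)" by simp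
      then show ?thesis using F F1 by blast
    qed
    then have "\<forall>j. \<exists>F. F \<in> bloch_space \<alpha> \<and> bloch_norm \<alpha> F \<le> 1 \<and> real j / 2 \<le> bloch_norm \<beta> (I_vec n g F)"
      by blast
    from choice[OF this] obtain F where F': "\<forall>j. F j \<in> bloch_space \<alpha> \<and> bloch_norm \<alpha> (F j) \<le> 1 \<and> real j / 2 \<le> bloch_norm \<beta> (I_vec n g (F j))"
      by blast
    then have F: "\<And>j. F j \<in> bloch_space \<alpha>" "\<And>j. bloch_norm \<alpha> (F j) \<le> 1"
        "\<And>j. real j / 2 \<le> bloch_norm \<beta> (I_vec n g (F j))" by auto
    have "\<forall>j. F j \<in> bloch_space \<alpha> \<and> bloch_norm \<alpha> (F j) \<le> 1" using F by blast
    then obtain r :: "nat \<Rightarrow> nat" and h where r: "strict_mono r" "h \<in> bloch_space \<beta>"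
        "(\<lambda>j. bloch_norm \<beta> (I_vec n g (F (r j)) - h)) \<longlonglongrightarrow> 0"
      using C unfolding compact_bloch_op_def by meson
    have "eventually (\<lambda>j. dist (bloch_norm \<beta> (I_vec n g (F (r j)) - h)) 0 < 1) sequentially"
      using r(3) by (rule tendstoD) simp
    then obtain N where N': "\<forall>j\<ge>N. dist (bloch_norm \<beta> (I_vec n g (F (r j)) - h)) 0 < 1"
      unfolding eventually_sequentially by blast
    have N: "bloch_norm \<beta> (I_vec n g (F (r j)) - h) < 1" if "j \<ge> N" for j
    proof -
      have "dist (bloch_norm \<beta> (I_vec n g (F (r j)) - h)) 0 < 1" using N' that by blast
      then show ?thesis by (simp add: dist_real_def)
    qed
    define j where "j = max N (nat \<lceil>2 * (bloch_norm \<beta> h + 1)\<rceil> + 1)"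
    have jN: "j \<ge> N" unfolding j_def by simp
    have "bloch_norm \<beta> (I_vec n g (F (r j))) \<le> bloch_norm \<beta> (I_vec n g (F (r j)) - h) + bloch_norm \<beta> h"
      by (rule norm_le_diff_plus[OF Tin[OF F(1)] r(2)])
    also have "\<dots> < 1 + bloch_norm \<beta> h" using N[OF jN] by simp
    finally have lt: "bloch_norm \<beta> (I_vec n g (F (r j))) < 1 + bloch_norm \<beta> h" .
    have "real j \<le> real (r j)" using seq_suble[OF r(1)] by simp
    moreover have "2 * (bloch_norm \<beta> h + 1) < real j"
    proof -
      have j1: "nat \<lceil>2 * (bloch_norm \<beta> h + 1)\<rceil> + 1 \<le> j" unfolding j_def by simp
      have c: "2 * (bloch_norm \<beta> h + 1) \<le> real (nat \<lceil>2 * (bloch_norm \<beta> h + 1)\<rceil>)" by (rule real_nat_ceiling_ge)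
      have "real (nat \<lceil>2 * (bloch_norm \<beta> h + 1)\<rceil> + 1) \<le> real j" using j1 by (rule of_nat_mono)
      then show ?thesis using c by simp
    qed
    moreover note F(3)[of "r j"] lt
    ultimately show False by argo
  qed
  then show ?thesis unfolding bounded_bloch_op_def using Tin by blast
qed


lemma sandwich0:
  assumes "\<And>j. 0 \<le> f j" "\<And>j. f j \<le> g j" "g \<longlonglongrightarrow> 0"
  shows "f \<longlonglongrightarrow> (0::real)"
  by (rule real_tendsto_sandwich[of "\<lambda>j. 0" f sequentially g]) (use assms in auto)

lemma compact_null:
  assumes al: "0 \<le> \<alpha>" and b: "0 < \<beta>" and gk: "\<And>k. k < n \<Longrightarrow> g k holomorphic_on D"
    and C: "compact_bloch_op \<alpha> \<beta> (I_vec n g)"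
    and G: "\<And>j. G j \<in> bloch_space \<alpha>" and GB: "\<And>j. bloch_norm \<alpha> (G j) \<le> B"
    and ln: "locnull G"
  shows "(\<lambda>j. bloch_norm \<beta> (I_vec n g (G j))) \<longlonglongrightarrow> 0"
proof (rule ccontr)
  have Tin: "\<And>f. f \<in> bloch_space \<alpha> \<Longrightarrow> I_vec n g f \<in> bloch_space \<beta>"
    using C unfolding compact_bloch_op_def by blast
  assume "\<not> ?thesis"
  then obtain \<epsilon> :: real where e: "0 < \<epsilon>" and fr: "frequently (\<lambda>j. \<not> dist (bloch_norm \<beta> (I_vec n g (G j))) 0 < \<epsilon>) sequentially"
    unfolding tendsto_iff not_all not_imp not_eventually by blast
  from freq_subseq[OF fr] obtain s :: "nat \<Rightarrow> nat" where s: "strict_mono s"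
    and sge: "\<And>j. \<not> dist (bloch_norm \<beta> (I_vec n g (G (s j)))) 0 < \<epsilon>" by blast
  have sge': "\<epsilon> \<le> bloch_norm \<beta> (I_vec n g (G (s j)))" for j
    using sge[of j] bloch_norm_nonneg[OF Tin[OF G]] by (simp add: dist_real_def)
  define B' where "B' = max B 1"
  have B'0: "0 < B'" unfolding B'_def by simp
  define F where "F = (\<lambda>j z. of_real (1 / B') * G (s j) z)"
  have F: "\<And>j. F j \<in> bloch_space \<alpha>" unfolding F_def using bloch_cmult(1)[OF G] .
  have F1: "bloch_norm \<alpha> (F j) \<le> 1" for j
  proof -
    have "bloch_norm \<alpha> (F j) \<le> cmod (complex_of_real (1 / B')) * bloch_norm \<alpha> (G (s j))"
      unfolding F_def by (rule bloch_cmult(2)[OF G])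
    also have "\<dots> = bloch_norm \<alpha> (G (s j)) / B'" using B'0 by (simp add: norm_divide)
    also have "\<dots> \<le> 1" using GB[of "s j"] B'0 unfolding B'_def by (simp add: divide_le_eq_1)
    finally show ?thesis .
  qed
  have "\<forall>j. F j \<in> bloch_space \<alpha> \<and> bloch_norm \<alpha> (F j) \<le> 1" using F F1 by blast
  then obtain r :: "nat \<Rightarrow> nat" and h where r: "strict_mono r" "h \<in> bloch_space \<beta>"
      "(\<lambda>j. bloch_norm \<beta> (I_vec n g (F (r j)) - h)) \<longlonglongrightarrow> 0"
    using C unfolding compact_bloch_op_def by meson
  have lnF: "locnull (\<lambda>j. F (r j))"
    unfolding F_def using locnull_cmult[OF locnull_subseq[OF locnull_subseq[OF ln s] r(1)], of "of_real (1 / B')"] .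
  have lnT: "locnull (\<lambda>j. I_vec n g (F (r j)))"
    by (rule locnull_Ivec[OF gk _ lnF]) (use F bloch_holo in auto)
  have h0: "h z = 0" if z: "z \<in> D" for z
  proof -
    have t1: "(\<lambda>j. I_vec n g (F (r j)) z) \<longlonglongrightarrow> 0" by (rule locnull_pointwise[OF lnT z])
    have dB: "\<And>j. I_vec n g (F (r j)) - h \<in> bloch_space \<beta>"
      using bloch_diff(1)[OF Tin[OF F] r(2)] by (simp add: fun_diff_def)
    have t2: "(\<lambda>j. cmod ((I_vec n g (F (r j)) - h) z)) \<longlonglongrightarrow> 0"
    proof (rule sandwich0)
      show "cmod ((I_vec n g (F (r j)) - h) z) \<le> (1 + (1 - (cmod z)\<^sup>2) powr (-\<beta>)) * bloch_norm \<beta> (I_vec n g (F (r j)) - h)" for j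
        using bloch_pointwise[OF dB z] b by simp
      show "(\<lambda>j. (1 + (1 - (cmod z)\<^sup>2) powr (-\<beta>)) * bloch_norm \<beta> (I_vec n g (F (r j)) - h)) \<longlonglongrightarrow> 0"
        using tendsto_mult[OF tendsto_const r(3)] by simp
    qed simp
    then have t2': "(\<lambda>j. I_vec n g (F (r j)) z - h z) \<longlonglongrightarrow> 0"
      using t2 unfolding fun_diff_def by (simp only: tendsto_norm_zero_iff)
    have "(\<lambda>j. I_vec n g (F (r j)) z - (I_vec n g (F (r j)) z - h z)) \<longlonglongrightarrow> 0 - 0"
      by (rule tendsto_diff[OF t1 t2'])
    then have "(\<lambda>j. h z) \<longlonglongrightarrow> 0" by simp
    then show "h z = 0" by (simp add: LIMSEQ_const_iff)
  qed
  have tF: "(\<lambda>j. bloch_norm \<beta> (I_vec n g (F (r j)))) \<longlonglongrightarrow> 0"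
  proof -
    have "bloch_norm \<beta> (I_vec n g (F (r j)) - h) = bloch_norm \<beta> (I_vec n g (F (r j)))" for j
      by (rule bloch_cong(2)) (use h0 in auto)
    then show ?thesis using r(3) by simp
  qed
  have le: "bloch_norm \<beta> (I_vec n g (G (s (r j)))) \<le> B' * bloch_norm \<beta> (I_vec n g (F (r j)))" for j
    unfolding F_def by (rule Ivec_scale_norm[OF G gk Tin B'0])
  have "(\<lambda>j. bloch_norm \<beta> (I_vec n g (G (s (r j))))) \<longlonglongrightarrow> 0"
  proof (rule sandwich0)
    show "\<And>j. 0 \<le> bloch_norm \<beta> (I_vec n g (G (s (r j))))" using bloch_norm_nonneg[OF Tin[OF G]] by blast
    show "(\<lambda>j. B' * bloch_norm \<beta> (I_vec n g (F (r j)))) \<longlonglongrightarrow> 0"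
      using tendsto_mult[OF tendsto_const tF] by simp
  qed (rule le)
  then have "eventually (\<lambda>j. dist (bloch_norm \<beta> (I_vec n g (G (s (r j))))) 0 < \<epsilon>) sequentially"
    using e by (rule tendstoD)
  then obtain j where "dist (bloch_norm \<beta> (I_vec n g (G (s (r j))))) 0 < \<epsilon>"
    using eventually_sequentially by auto
  then show False using sge'[of "r j"] bloch_norm_nonneg[OF Tin[OF G]] by (simp add: dist_real_def)
qed


definition LL :: "nat \<Rightarrow> nat \<Rightarrow> nat \<Rightarrow> real" where
  "LL n m i = (\<Sum>r<n-i. real (m choose r) * 2 ^ (m - r) * 2 ^ (i + r))"

lemma LL_nonneg: "0 \<le> LL n m i" unfolding LL_def by (intro sum_nonneg) auto

lemma psi_local:
  assumes a: "a \<in> D" and z: "cmod z \<le> \<rho>" and r: "\<rho> < 1" and nm: "n \<le> m"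
  shows "cmod (psi n m i a z) \<le> LL n m i / (1 - \<rho>) ^ m * (1 - cmod a) ^ (m - n)"
proof -
  have zD: "z \<in> D" using z r by simp
  define t where "t = 1 - cmod a"
  have t0: "0 < t" and t1: "t \<le> 1" using a unfolding t_def by auto
  have za: "cmod (z - a) \<le> 2" using zD a norm_triangle_ineq4[of z a] by simp
  have num: "cmod (\<Sum>r<n-i. cf m a r * (z - a) ^ (i + r)) \<le> LL n m i * t ^ (m - n)"
  proof -
    have "cmod (\<Sum>r<n-i. cf m a r * (z - a) ^ (i + r)) \<le> (\<Sum>r<n-i. cmod (cf m a r * (z - a) ^ (i + r)))"
      by (rule norm_sum)
    also have "\<dots> \<le> (\<Sum>r<n-i. real (m choose r) * 2 ^ (m - r) * 2 ^ (i + r) * t ^ (m - n))"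
    proof (rule sum_mono)
      fix r assume rr: "r \<in> {..<n-i}"
      then have rm: "r \<le> m" using nm by auto
      have "cmod (cf m a r * (z - a) ^ (i + r)) = cmod (cf m a r) * cmod (z - a) ^ (i + r)"
        by (simp add: norm_mult norm_power)
      also have "\<dots> \<le> (real (m choose r) * 2 ^ (m - r) * t ^ (m - r)) * 2 ^ (i + r)"
        using cf_norm[OF a rm] za t0 unfolding t_def by (intro mult_mono power_mono) auto
      also have "\<dots> \<le> (real (m choose r) * 2 ^ (m - r) * t ^ (m - n)) * 2 ^ (i + r)"
      proof -
        have "t ^ (m - r) \<le> t ^ (m - n)" using t0 t1 rr by (intro power_decreasing) auto
        then show ?thesis by (intro mult_right_mono mult_left_mono) auto
      qed
      finally show "cmod (cf m a r * (z - a) ^ (i + r)) \<le> real (m choose r) * 2 ^ (m - r) * 2 ^ (i + r) * t ^ (m - n)"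
        by (simp add: algebra_simps)
    qed
    also have "\<dots> = LL n m i * t ^ (m - n)" unfolding LL_def by (simp add: sum_distrib_right)
    finally show ?thesis .
  qed
  have den: "(1 - \<rho>) ^ m \<le> cmod (1 - cnj a * z) ^ m"
  proof (rule power_mono)
    show "1 - \<rho> \<le> cmod (1 - cnj a * z)" using den_ge(2)[OF a zD] z by linarith
  qed (use r in simp)
  have dp: "0 < (1 - \<rho>) ^ m" using r by simp
  have "cmod (psi n m i a z) = cmod (\<Sum>r<n-i. cf m a r * (z - a) ^ (i + r)) / cmod (1 - cnj a * z) ^ m"
    unfolding psi_def by (simp add: norm_divide norm_power)
  also have "\<dots> \<le> LL n m i * t ^ (m - n) / (1 - \<rho>) ^ m"
    using num den dp LL_nonneg t0 by (intro frac_le) auto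
  finally show ?thesis unfolding t_def by simp
qed


lemma term_locnull:
  assumes al: "0 \<le> \<alpha>" and G: "\<And>j. G j \<in> bloch_space \<alpha>" and GB: "\<And>j. bloch_norm \<alpha> (G j) \<le> B"
    and ln: "locnull G" and aD: "\<And>j. a j \<in> D" and i: "1 \<le> i" "i < n"
  shows "locnull (\<lambda>j z. ((deriv ^^ i) (G j) (a j) / fact i) * psi n (mm \<alpha> n) i (a j) z)"
proof (rule locnullI)
  fix \<rho> \<epsilon> :: real assume r: "\<rho> < 1" and e: "0 < \<epsilon>"
  define m where "m = mm \<alpha> n"
  have nm: "n \<le> m" unfolding m_def mm_def by simp
  define Lr where "Lr = LL n m i / (1 - \<rho>) ^ m"
  have Lr0: "0 \<le> Lr" unfolding Lr_def using LL_nonneg r by simp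
  define E where "E = \<alpha> + real i - 1"
  have E0: "0 \<le> E" unfolding E_def using al i by simp
  have mE: "1 \<le> real (m - n) - E"
  proof -
    have "\<alpha> + real n + real n + 1 \<le> real m" unfolding m_def using mm_ge[OF al] .
    then show ?thesis unfolding E_def using nm i by (simp add: of_nat_diff)
  qed
  define B' where "B' = max B 0"
  have B'0: "0 \<le> B'" unfolding B'_def by simp
  define K1 where "K1 = fact (i - 1) * B' * Lr * 4 powr E"
  have K10: "0 \<le> K1" unfolding K1_def using B'0 Lr0 by simp
  define \<eta> where "\<eta> = \<epsilon> / (K1 + 1)"
  have \<eta>0: "0 < \<eta>" unfolding \<eta>_def using e K10 by simp
  have K1\<eta>: "K1 * \<eta> < \<epsilon>"
  proof -
    have "K1 * \<eta> = \<epsilon> * (K1 / (K1 + 1))" unfolding \<eta>_def by simp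
    also have "\<dots> < \<epsilon> * 1" using e K10 by (intro mult_strict_left_mono) auto
    finally show ?thesis by simp
  qed
  define \<epsilon>2 where "\<epsilon>2 = \<epsilon> / (Lr + 1)"
  have e20: "0 < \<epsilon>2" unfolding \<epsilon>2_def using e Lr0 by simp
  have e2L: "\<epsilon>2 * Lr < \<epsilon>"
  proof -
    have "\<epsilon>2 * Lr = \<epsilon> * (Lr / (Lr + 1))" unfolding \<epsilon>2_def by simp
    also have "\<dots> < \<epsilon> * 1" using e Lr0 by (intro mult_strict_left_mono) auto
    finally show ?thesis by simp
  qed
  have hol: "\<And>j. G j holomorphic_on D" using bloch_holo[OF G] .
  have r2: "1 - \<eta> < 1" using \<eta>0 by simp
  from locnullD[OF locnull_deriv[OF hol ln, of i] r2 e20]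
  show "eventually (\<lambda>j. \<forall>z. cmod z \<le> \<rho> \<longrightarrow> cmod (((deriv ^^ i) (G j) (a j) / fact i) * psi n (mm \<alpha> n) i (a j) z) \<le> \<epsilon>) sequentially"
  proof (rule eventually_mono, intro allI impI)
    fix j z assume ev: "\<forall>w. cmod w \<le> 1 - \<eta> \<longrightarrow> cmod ((deriv ^^ i) (G j) w) \<le> \<epsilon>2" and z: "cmod z \<le> \<rho>"
    define t where "t = 1 - cmod (a j)"
    define X where "X = (deriv ^^ i) (G j) (a j)"
    have t0: "0 < t" and t1: "t \<le> 1" using aD[of j] unfolding t_def by auto
    have ps: "cmod (psi n m i (a j) z) \<le> Lr * t ^ (m - n)"
      using psi_local[OF aD z r nm, of i] unfolding Lr_def t_def by simp
    have ps1: "cmod (psi n m i (a j) z) \<le> Lr"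
    proof -
      have "t ^ (m - n) \<le> 1" using t0 t1 by (simp add: power_le_one)
      then have "Lr * t ^ (m - n) \<le> Lr * 1" using Lr0 by (intro mult_left_mono) auto
      then show ?thesis using ps by simp
    qed
    have "cmod ((X / fact i) * psi n m i (a j) z) = (cmod X / fact i) * cmod (psi n m i (a j) z)"
      by (simp add: norm_mult norm_divide)
    also have "\<dots> \<le> cmod X * cmod (psi n m i (a j) z)"
    proof (rule mult_right_mono)
      have "(1::real) \<le> fact i" by simp
      then show "cmod X / fact i \<le> cmod X" by (simp add: divide_le_eq mult_le_cancel_left1)
    qed simp
    also have "\<dots> \<le> \<epsilon>"
    proof (cases "t \<le> \<eta>")
      case True
      have "cmod X \<le> fact (i - 1) * bloch_norm \<alpha> (G j) * ((1 - (cmod (a j))\<^sup>2) / 4) powr (-E)"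
        unfolding X_def E_def using bloch_growth[OF G al aD i(1)] by simp
      also have "\<dots> \<le> fact (i - 1) * B' * (t / 4) powr (-E)"
      proof (intro mult_mono)
        show "bloch_norm \<alpha> (G j) \<le> B'" using GB[of j] unfolding B'_def by simp
        have "t / 4 \<le> (1 - (cmod (a j))\<^sup>2) / 4" unfolding t_def using aD[of j]
          by (simp add: power2_eq_square) (smt (verit) mult_left_le_one_le norm_ge_zero)
        then show "((1 - (cmod (a j))\<^sup>2) / 4) powr (-E) \<le> (t / 4) powr (-E)"
          using t0 E0 by (intro powr_mono2') auto
      qed (use B'0 bloch_norm_nonneg[OF G] in auto)
      finally have X: "cmod X \<le> fact (i - 1) * B' * (t / 4) powr (-E)" .
      have "cmod X * cmod (psi n m i (a j) z) \<le> (fact (i - 1) * B' * (t / 4) powr (-E)) * (Lr * t ^ (m - n))"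
        using X ps B'0 by (intro mult_mono) auto
      also have "\<dots> = fact (i - 1) * B' * Lr * ((t / 4) powr (-E) * t ^ (m - n))" by (simp add: algebra_simps)
      also have "(t / 4) powr (-E) * t ^ (m - n) = 4 powr E * t powr (real (m - n) - E)"
      proof -
        have "(t / 4) powr (-E) = 4 powr E * t powr (-E)" using t0 by (simp add: powr_divide powr_minus field_simps)
        moreover have "t ^ (m - n) = t powr real (m - n)" using t0 by (simp add: powr_realpow)
        ultimately show ?thesis using t0 by (simp add: powr_add[symmetric] algebra_simps)
      qed
      also have "fact (i - 1) * B' * Lr * (4 powr E * t powr (real (m - n) - E)) = K1 * t powr (real (m - n) - E)"
        unfolding K1_def by (simp add: algebra_simps)
      also have "\<dots> \<le> K1 * t" using K10 powr_le_one_le[OF t0 t1 mE] by (intro mult_left_mono) auto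
      also have "\<dots> \<le> K1 * \<eta>" using K10 True by (intro mult_left_mono) auto
      finally show ?thesis using K1\<eta> unfolding m_def by simp
    next
      case False
      have "cmod (a j) \<le> 1 - \<eta>" using False unfolding t_def by simp
      then have X: "cmod X \<le> \<epsilon>2" using ev unfolding X_def by blast
      have "cmod X * cmod (psi n m i (a j) z) \<le> \<epsilon>2 * Lr" using X ps1 e20 by (intro mult_mono) auto
      then show ?thesis using e2L unfolding m_def by simp
    qed
    finally show "cmod (((deriv ^^ i) (G j) (a j) / fact i) * psi n (mm \<alpha> n) i (a j) z) \<le> \<epsilon>"
      unfolding X_def m_def .
  qed
qed

lemma Pop_locnull:
  assumes al: "0 \<le> \<alpha>" and G: "\<And>j. G j \<in> bloch_space \<alpha>" and GB: "\<And>j. bloch_norm \<alpha> (G j) \<le> B"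
    and ln: "locnull G" and aD: "\<And>j. a j \<in> D" and k: "k < n"
  shows "locnull (\<lambda>j. Pop \<alpha> n k (a j) (G j))"
proof (cases "k = 0")
  case True
  have e: "(\<lambda>j. Pop \<alpha> n k (a j) (G j)) = (\<lambda>j z. G j z - (\<Sum>i\<in>{1..<n}. ((deriv ^^ i) (G j) (a j) / fact i) * psi n (mm \<alpha> n) i (a j) z))"
    by (simp only: Pop_def if_P[OF True])
  show ?thesis unfolding e
    by (intro locnull_diff[OF ln] locnull_sum term_locnull[OF al G GB ln aD]) auto
next
  case False
  have e: "(\<lambda>j. Pop \<alpha> n k (a j) (G j)) = (\<lambda>j z. ((deriv ^^ k) (G j) (a j) / fact k) * psi n (mm \<alpha> n) k (a j) z)"
    by (simp only: Pop_def if_not_P[OF False])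
  show ?thesis unfolding e using False k by (intro term_locnull[OF al G GB ln aD]) auto
qed


lemma compact_in_cball:
  assumes K: "compact K" "K \<subseteq> D"
  shows "\<exists>\<rho><1. \<forall>z\<in>K. cmod z \<le> \<rho>"
proof (cases "K = {}")
  case True then show ?thesis by (intro exI[of _ 0]) auto
next
  case False
  have "continuous_on K cmod" by (intro continuous_intros)
  from continuous_attains_sup[OF K(1) False this] obtain x where x: "x \<in> K" "\<forall>y\<in>K. cmod y \<le> cmod x" by blast
  have "cmod x < 1" using x K(2) by auto
  then show ?thesis using x by blast
qed

lemma montel_extract:
  assumes al: "0 \<le> \<alpha>" and F: "\<forall>j. F j \<in> bloch_space \<alpha> \<and> bloch_norm \<alpha> (F j) \<le> 1"
  obtains r :: "nat \<Rightarrow> nat" and f where "strict_mono r" "f \<in> bloch_space \<alpha>" "bloch_norm \<alpha> f \<le> 2"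
    "locnull (\<lambda>j z. F (r j) z - f z)"
proof -
  define H where "H = {h. h \<in> bloch_space \<alpha> \<and> bloch_norm \<alpha> h \<le> 1}"
  have Hh: "\<And>h. h \<in> H \<Longrightarrow> h holomorphic_on D" unfolding H_def using bloch_holo by blast
  have Hb: "\<exists>B. \<forall>h\<in>H. \<forall>z\<in>K. cmod (h z) \<le> B" if K: "compact K" "K \<subseteq> D" for K
  proof -
    obtain \<rho> where r: "\<rho> < 1" and Kr: "\<forall>z\<in>K. cmod z \<le> \<rho>" using compact_in_cball[OF K] by blast
    define \<rho>0 where "\<rho>0 = max \<rho> 0"
    have r0: "0 \<le> \<rho>0" "\<rho>0 < 1" unfolding \<rho>0_def using r by auto
    define B where "B = 1 + (1 - \<rho>0\<^sup>2) powr (-\<alpha>)"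
    show ?thesis
    proof (intro exI[of _ B] ballI)
      fix h z assume h: "h \<in> H" and z: "z \<in> K"
      have hb: "h \<in> bloch_space \<alpha>" and h1: "bloch_norm \<alpha> h \<le> 1" using h unfolding H_def by auto
      have zr: "cmod z \<le> \<rho>0" using Kr z unfolding \<rho>0_def by fastforce
      have zD: "z \<in> D" using z K(2) by blast
      have "cmod (h z) \<le> (1 + (1 - (cmod z)\<^sup>2) powr (-\<alpha>)) * bloch_norm \<alpha> h"
        by (rule bloch_pointwise[OF hb zD al])
      also have "\<dots> \<le> B * 1"
      proof (rule mult_mono)
        have "(cmod z)\<^sup>2 \<le> \<rho>0\<^sup>2" using zr by (simp add: power_mono)
        moreover have "0 < 1 - (cmod z)\<^sup>2" using w_pos[OF zD] .
        moreover have "\<rho>0\<^sup>2 < 1" using r0 by (simp add: power_less_one_iff abs_square_less_1)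
        ultimately have "(1 - (cmod z)\<^sup>2) powr (-\<alpha>) \<le> (1 - \<rho>0\<^sup>2) powr (-\<alpha>)"
          using al by (intro powr_mono2') auto
        then show "1 + (1 - (cmod z)\<^sup>2) powr (-\<alpha>) \<le> B" unfolding B_def by simp
      qed (use h1 bloch_norm_nonneg[OF hb] B_def in auto)
      finally show "cmod (h z) \<le> B" by simp
    qed
  qed
  have rng: "range F \<subseteq> H" using F unfolding H_def by auto
  obtain g and r :: "nat \<Rightarrow> nat" where g: "g holomorphic_on D" and r: "strict_mono r"
    and pw: "\<And>x. x \<in> D \<Longrightarrow> ((\<lambda>j. F (r j) x) \<longlonglongrightarrow> g x)"
    and ul: "\<And>K. compact K \<Longrightarrow> K \<subseteq> D \<Longrightarrow> uniform_limit K (F \<circ> r) g sequentially"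
    using Montel[OF open_ball Hh Hb rng] by metis
  define G where "G = (\<lambda>j z. F (r j) z - g z)"
  have ln: "locnull G"
  proof (rule locnullI)
    fix \<rho> \<epsilon> :: real assume rr: "\<rho> < 1" and e: "0 < \<epsilon>"
    define K where "K = cball (0::complex) (max \<rho> 0)"
    have K: "compact K" "K \<subseteq> D" unfolding K_def using rr by auto
    from ul[OF K] e have "eventually (\<lambda>j. \<forall>x\<in>K. dist ((F \<circ> r) j x) (g x) < \<epsilon>) sequentially"
      unfolding uniform_limit_iff by blast
    then show "eventually (\<lambda>j. \<forall>z. cmod z \<le> \<rho> \<longrightarrow> cmod (G j z) \<le> \<epsilon>) sequentially"
    proof (rule eventually_mono, intro allI impI)
      fix j z assume h: "\<forall>x\<in>K. dist ((F \<circ> r) j x) (g x) < \<epsilon>" and z: "cmod z \<le> \<rho>"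
      have "z \<in> K" unfolding K_def using z by simp
      then have "dist (F (r j) z) (g z) < \<epsilon>" using h by simp
      then show "cmod (G j z) \<le> \<epsilon>" unfolding G_def by (simp add: dist_norm)
    qed
  qed
  have Fh: "\<And>j. F j holomorphic_on D" using F bloch_holo by blast
  have Gh: "\<And>j. G j holomorphic_on D" unfolding G_def using Fh g by (intro holomorphic_intros) auto
  have dconv: "(\<lambda>j. deriv (F (r j)) z) \<longlonglongrightarrow> deriv g z" if z: "z \<in> D" for z
  proof -
    have "(\<lambda>j. (deriv ^^ 1) (G j) z) \<longlonglongrightarrow> 0"
      by (rule locnull_pointwise[OF locnull_deriv[OF Gh ln] z])
    moreover have "(deriv ^^ 1) (G j) z = deriv (F (r j)) z - deriv g z" for j
      unfolding G_def using z Fh g by (simp add: deriv_diff holomorphic_on_imp_differentiable_at[of _ D])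
    ultimately have "(\<lambda>j. deriv (F (r j)) z - deriv g z) \<longlonglongrightarrow> 0" by simp
    then show ?thesis by (simp add: LIM_zero_iff)
  qed
  have wb: "(1 - (cmod z)\<^sup>2) powr \<alpha> * cmod (deriv g z) \<le> 1" if z: "z \<in> D" for z
  proof (rule LIMSEQ_le_const2)
    show "(\<lambda>j. (1 - (cmod z)\<^sup>2) powr \<alpha> * cmod (deriv (F (r j)) z)) \<longlonglongrightarrow> (1 - (cmod z)\<^sup>2) powr \<alpha> * cmod (deriv g z)"
      by (intro tendsto_intros dconv z)
    show "\<exists>N. \<forall>j\<ge>N. (1 - (cmod z)\<^sup>2) powr \<alpha> * cmod (deriv (F (r j)) z) \<le> 1"
      using bloch_upper_norm[OF _ z] F by (meson order_trans)
  qed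
  have gB: "g \<in> bloch_space \<alpha>" and gs: "bloch_seminorm \<alpha> g \<le> 1" using bloch_bound_intro[OF g wb] by auto
  have g0: "cmod (g 0) \<le> 1"
  proof (rule LIMSEQ_le_const2)
    show "(\<lambda>j. cmod (F (r j) 0)) \<longlonglongrightarrow> cmod (g 0)" by (intro tendsto_intros pw) simp
    show "\<exists>N. \<forall>j\<ge>N. cmod (F (r j) 0) \<le> 1" using bloch_f0_le_norm F by (meson order_trans)
  qed
  have "bloch_norm \<alpha> g \<le> 2" unfolding bloch_norm_def using gs g0 by simp
  then show ?thesis using that[OF r gB _ ln[unfolded G_def]] by simp
qed


lemma Ink_diff:
  assumes F: "F holomorphic_on D" and f: "f holomorphic_on D" and g: "g holomorphic_on D"
  shows "\<forall>z\<in>D. I_nk n k g (\<lambda>w. F w - f w) z = I_nk n k g F z - I_nk n k g f z"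
proof -
  have "\<forall>z\<in>D. (deriv ^^ k) (\<lambda>w. F w - f w) z * g z = (deriv ^^ k) F z * g z - (deriv ^^ k) f z * g z"
    using F f by (auto simp: higher_deriv_diff[of _ D] algebra_simps)
  then have "\<forall>z\<in>D. (integ_op ^^ n) (\<lambda>z. (deriv ^^ k) (\<lambda>w. F w - f w) z * g z) z
       = (integ_op ^^ n) (\<lambda>z. (deriv ^^ k) F z * g z - (deriv ^^ k) f z * g z) z"
    by (rule iter_cong)
  moreover have "\<forall>z\<in>D. (integ_op ^^ n) (\<lambda>z. (deriv ^^ k) F z * g z - (deriv ^^ k) f z * g z) z
       = (integ_op ^^ n) (\<lambda>z. (deriv ^^ k) F z * g z) z - (integ_op ^^ n) (\<lambda>z. (deriv ^^ k) f z * g z) z"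
    by (rule iter_diff[OF nk_holo[OF F g] nk_holo[OF f g]])
  ultimately show ?thesis unfolding I_nk_def by simp
qed

lemma compact_imp_each:
  assumes al: "0 \<le> \<alpha>" and b: "0 < \<beta>" and n: "0 < n" and gk: "\<And>k. k < n \<Longrightarrow> g k holomorphic_on D"
    and C: "compact_bloch_op \<alpha> \<beta> (I_vec n g)" and k: "k < n"
  shows "compact_bloch_op \<alpha> \<beta> (I_nk n k (g k))"
proof -
  have Bd: "bounded_bloch_op \<alpha> \<beta> (I_nk n k (g k))"
    by (rule bounded_imp_each[OF al b n gk compact_imp_bounded[OF al gk C] k])
  have Tkin: "\<And>f. f \<in> bloch_space \<alpha> \<Longrightarrow> I_nk n k (g k) f \<in> bloch_space \<beta>"
    using Bd unfolding bounded_bloch_op_def by blast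
  have Tin: "\<And>f. f \<in> bloch_space \<alpha> \<Longrightarrow> I_vec n g f \<in> bloch_space \<beta>"
    using C unfolding compact_bloch_op_def by blast
  let ?E = "\<beta> + real n - 1"
  have seq: "\<exists>(r::nat\<Rightarrow>nat) h. strict_mono r \<and> h \<in> bloch_space \<beta> \<and> (\<lambda>j. bloch_norm \<beta> (I_nk n k (g k) (F (r j)) - h)) \<longlonglongrightarrow> 0"
    if F: "\<forall>j. F j \<in> bloch_space \<alpha> \<and> bloch_norm \<alpha> (F j) \<le> 1" for F
  proof -
    obtain r :: "nat \<Rightarrow> nat" and f where r: "strict_mono r" and fB: "f \<in> bloch_space \<alpha>" and f2: "bloch_norm \<alpha> f \<le> 2"
      and ln: "locnull (\<lambda>j z. F (r j) z - f z)"
      using montel_extract[OF al F] by blast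
    define G where "G = (\<lambda>j z. F (r j) z - f z)"
    have GB: "\<And>j. G j \<in> bloch_space \<alpha>" unfolding G_def using bloch_diff(1) F fB by blast
    have G3: "bloch_norm \<alpha> (G j) \<le> 3" for j
    proof -
      have Fr: "F (r j) \<in> bloch_space \<alpha>" "bloch_norm \<alpha> (F (r j)) \<le> 1" using F by auto
      show ?thesis unfolding G_def using bloch_diff(2)[OF Fr(1) fB] Fr(2) f2 by linarith
    qed
    have lnG: "locnull G" unfolding G_def using ln .
    define \<Phi> where "\<Phi> = (\<lambda>j a. (1 - (cmod a)\<^sup>2) powr ?E * cmod ((deriv ^^ k) (G j) a * g k a))"
    have ev: "eventually (\<lambda>j. \<forall>a\<in>D. \<Phi> j a \<le> \<epsilon>) sequentially" if e: "0 < \<epsilon>" for \<epsilon>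
    proof (rule ccontr)
      assume "\<not> ?thesis"
      then have fr: "frequently (\<lambda>j. \<exists>a\<in>D. \<epsilon> < \<Phi> j a) sequentially"
        unfolding not_eventually by (simp add: not_le)
      define a where "a = (\<lambda>j. if \<exists>a\<in>D. \<epsilon> < \<Phi> j a then (SOME a. a \<in> D \<and> \<epsilon> < \<Phi> j a) else 0)"
      have aP: "a j \<in> D \<and> \<epsilon> < \<Phi> j (a j)" if "\<exists>a\<in>D. \<epsilon> < \<Phi> j a" for j
      proof -
        have "\<exists>x. x \<in> D \<and> \<epsilon> < \<Phi> j x" using that by blast
        then have "(SOME x. x \<in> D \<and> \<epsilon> < \<Phi> j x) \<in> D \<and> \<epsilon> < \<Phi> j (SOME x. x \<in> D \<and> \<epsilon> < \<Phi> j x)"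
          by (rule someI_ex)
        then show ?thesis unfolding a_def using that by simp
      qed
      have aD: "a j \<in> D" for j
        using aP[of j] unfolding a_def by (cases "\<exists>a\<in>D. \<epsilon> < \<Phi> j a") auto
      define P where "P = (\<lambda>j. Pop \<alpha> n k (a j) (G j))"
      have PB: "\<And>j. P j \<in> bloch_space \<alpha>" unfolding P_def using Pop_bloch(1)[OF GB al aD k] .
      have PN: "bloch_norm \<alpha> (P j) \<le> KP \<alpha> n * 3" for j
      proof -
        have "bloch_norm \<alpha> (P j) \<le> KP \<alpha> n * bloch_norm \<alpha> (G j)" unfolding P_def by (rule Pop_bloch(2)[OF GB al aD k])
        also have "\<dots> \<le> KP \<alpha> n * 3" using G3 KP_nonneg by (intro mult_left_mono) auto
        finally show ?thesis .
      qed
      have lnP: "locnull P" unfolding P_def by (rule Pop_locnull[OF al GB G3 lnG aD k])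
      have tP: "(\<lambda>j. bloch_norm \<beta> (I_vec n g (P j))) \<longlonglongrightarrow> 0"
        by (rule compact_null[OF al b gk C PB PN lnP])
      have Pk: "\<Phi> j (a j) \<le> fact (n - 1) * 4 powr ?E * bloch_norm \<beta> (I_vec n g (P j))" for j
        unfolding \<Phi>_def P_def by (rule key_ineq[OF al b n gk GB aD k Tin[OF Pop_bloch(1)[OF GB al aD k]]])
      have "(\<lambda>j. \<Phi> j (a j)) \<longlonglongrightarrow> 0"
      proof (rule sandwich0)
        show "\<And>j. 0 \<le> \<Phi> j (a j)" unfolding \<Phi>_def by simp
        show "(\<lambda>j. fact (n - 1) * 4 powr ?E * bloch_norm \<beta> (I_vec n g (P j))) \<longlonglongrightarrow> 0"
          using tendsto_mult[OF tendsto_const tP] by simp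
      qed (rule Pk)
      then have "eventually (\<lambda>j. dist (\<Phi> j (a j)) 0 < \<epsilon>) sequentially" using e by (rule tendstoD)
      then have ev2: "eventually (\<lambda>j. \<Phi> j (a j) < \<epsilon>) sequentially"
        by (rule eventually_mono) (simp add: \<Phi>_def dist_real_def)
      have "frequently (\<lambda>j. \<Phi> j (a j) < \<epsilon> \<and> (\<exists>a\<in>D. \<epsilon> < \<Phi> j a)) sequentially"
        by (rule frequently_eventually_conj[OF fr ev2])
      then have "frequently (\<lambda>j. False) sequentially"
        by (rule frequently_elim1) (use aP in force)
      then show False by simp
    qed
    define c where "c = cint \<beta> n (n - 1)"
    have c0: "0 \<le> c" unfolding c_def using cint_nonneg[OF b] by simp
    have diffeq: "bloch_norm \<beta> (I_nk n k (g k) (F (r j)) - I_nk n k (g k) f) = bloch_norm \<beta> (I_nk n k (g k) (G j))" for j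
    proof (rule bloch_cong(2))
      have "\<forall>z\<in>D. I_nk n k (g k) (\<lambda>w. F (r j) w - f w) z = I_nk n k (g k) (F (r j)) z - I_nk n k (g k) f z"
        using Ink_diff[OF bloch_holo bloch_holo gk[OF k]] F fB by blast
      then show "\<forall>z\<in>D. (I_nk n k (g k) (F (r j)) - I_nk n k (g k) f) z = I_nk n k (g k) (G j) z"
        unfolding G_def by simp
    qed
    have lim: "(\<lambda>j. bloch_norm \<beta> (I_nk n k (g k) (G j))) \<longlonglongrightarrow> 0"
    proof (rule tendstoI)
      fix e :: real assume e: "0 < e"
      define \<epsilon> where "\<epsilon> = e / (2 * (c + 1))"
      have e0: "0 < \<epsilon>" unfolding \<epsilon>_def using e c0 by simp
      have ce: "c * \<epsilon> < e"
      proof -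
        have "c * \<epsilon> = e * (c / (2 * (c + 1)))" unfolding \<epsilon>_def by simp
        also have "\<dots> < e * 1" using e c0 by (intro mult_strict_left_mono) auto
        finally show ?thesis by simp
      qed
      from ev[OF e0] show "eventually (\<lambda>j. dist (bloch_norm \<beta> (I_nk n k (g k) (G j))) 0 < e) sequentially"
      proof (rule eventually_mono)
        fix j assume h: "\<forall>a\<in>D. \<Phi> j a \<le> \<epsilon>"
        have hh: "(\<lambda>z. (deriv ^^ k) (G j) z * g k z) holomorphic_on D"
          using nk_holo[OF bloch_holo[OF GB] gk[OF k]] .
        have bnd: "cmod ((deriv ^^ k) (G j) z * g k z) \<le> \<epsilon> * (1 - (cmod z)\<^sup>2) powr (-?E)" if z: "z \<in> D" for z
          using weight_div[OF z] h z unfolding \<Phi>_def by blast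
        have "bloch_norm \<beta> (I_nk n k (g k) (G j)) \<le> c * \<epsilon>"
          unfolding I_nk_def c_def using iter_growth(2)[OF hh b n _ bnd] e0 by simp
        moreover have "0 \<le> bloch_norm \<beta> (I_nk n k (g k) (G j))" using bloch_norm_nonneg[OF Tkin[OF GB]] .
        ultimately show "dist (bloch_norm \<beta> (I_nk n k (g k) (G j))) 0 < e" using ce by (simp add: dist_real_def)
      qed
    qed
    have "(\<lambda>j. bloch_norm \<beta> (I_nk n k (g k) (F (r j)) - I_nk n k (g k) f)) \<longlonglongrightarrow> 0"
      unfolding diffeq using lim .
    then show ?thesis using r Tkin[OF fB] by blast
  qed
  show ?thesis unfolding compact_bloch_op_def using Tkin seq by blast
qed

theorem theoremA:
  fixes \<alpha> \<beta> :: real and n :: nat and g :: "nat \<Rightarrow> complex \<Rightarrow> complex"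
  assumes "\<alpha> > 0" and "\<beta> > 0" and "n > 0"
    and "\<And>k. k < n \<Longrightarrow> g k holomorphic_on ball 0 1"
  shows "(bounded_bloch_op \<alpha> \<beta> (I_vec n g) \<longleftrightarrow>
            (\<forall>k<n. bounded_bloch_op \<alpha> \<beta> (I_nk n k (g k))))
       \<and> (compact_bloch_op \<alpha> \<beta> (I_vec n g) \<longleftrightarrow>
            (\<forall>k<n. compact_bloch_op \<alpha> \<beta> (I_nk n k (g k))))"
proof -
  have al: "0 \<le> \<alpha>" using assms(1) by simp
  show ?thesis
  proof (intro conjI iffI allI impI)
    show "bounded_bloch_op \<alpha> \<beta> (I_nk n k (g k))" if "bounded_bloch_op \<alpha> \<beta> (I_vec n g)" "k < n" for k
      by (rule bounded_imp_each[OF al assms(2,3,4) that])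
    show "bounded_bloch_op \<alpha> \<beta> (I_vec n g)" if "\<forall>k<n. bounded_bloch_op \<alpha> \<beta> (I_nk n k (g k))"
      by (rule each_imp_bounded[OF assms(4) that])
    show "compact_bloch_op \<alpha> \<beta> (I_nk n k (g k))" if "compact_bloch_op \<alpha> \<beta> (I_vec n g)" "k < n" for k
      by (rule compact_imp_each[OF al assms(2,3,4) that])
    show "compact_bloch_op \<alpha> \<beta> (I_vec n g)" if "\<forall>k<n. compact_bloch_op \<alpha> \<beta> (I_nk n k (g k))"
      by (rule each_imp_compact[OF assms(4) that])
  qed
qed


end
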